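(* Let $\mathcal G$ be a Kac–Moody Lie algebra, $A=\mathbb C[t_1^{\pm1},\dots,t_n^{\pm1}]$, and $\psi$ a linear functional on $H=\mathfrak h'\otimes A\oplus\mathfrak h''$. Then $V(\psi)$ has finite-dimensional weight spaces with respect to $\mathfrak h$ if and only if there is a co-finite ideal $I$ of $A$ (i.e. $\dim A/I<\infty$) such that $\psi(\mathfrak h'\otimes I)=0$, i.e. $\psi$ factors through $\mathfrak h'\otimes A/I$.
   Context: $\mathcal G$ is a Kac–Moody Lie algebra with Cartan subalgebra $\mathfrak h$; $\mathcal G'=[\mathcal G,\mathcal G]$, $\mathfrak h'=\mathfrak h\cap\mathcal G'$, $\mathfrak h''$ a complement with $\mathfrak h=\mathfrak h'\oplus\mathfrak h''$, and $\mathcal G'=N^-\oplus\mathfrak h'\oplus N^+$ the decomposition into negative root spaces, $\mathfrak h'$, positive root spaces. $t^{\underline m}=t_1^{m_1}\cdots t_n^{m_n}$. The Lie algebra $\mathcal G'\otimes A\oplus\mathfrak h''$ has bracket $[X\otimes f,Y\otimes g]=[X,Y]\otimes fg$, $[h,X\otimes f]=[h,X]\otimes f$ for $h\in\mathfrak h''$, $[\mathfrak h'',\mathfrak h'']=0$; $H$ is an abelian subalgebra. Let $\mathbb C_\psi$ be the one-dimensional module on which $H$ acts by $\psi$ and $N^+\otimes A$ by $0$; $V(\psi)$ is the unique irreducible quotient of $U(\mathcal G'\otimes A\oplus\mathfrak h'')\otimes_{U(N^+\otimes A\oplus H)}\mathbb C_\psi$. Weight spaces are eigenspaces of $\mathfrak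 h=\mathfrak h'\otimes1\oplus\mathfrak h''$. *)

theory Defs
  imports Complex_Main
begin

text \<open>A complex vector space is a type of class ab_group_add together with a scalar
  multiplication sc satisfying the locale vector_space sc.\<close>

definition csubspace :: "(complex \<Rightarrow> 'a \<Rightarrow> 'a) \<Rightarrow> 'a::ab_group_add set \<Rightarrow> bool" where
  "csubspace sc S \<longleftrightarrow> 0 \<in> S \<and> (\<forall>x\<in>S. \<forall>y\<in>S. x + y \<in> S) \<and> (\<forall>c. \<forall>x\<in>S. sc c x \<in> S)"

definition in_fspan :: "(complex \<Rightarrow> 'a \<Rightarrow> 'a) \<Rightarrow> 'a::ab_group_add set \<Rightarrow> 'a \<Rightarrow> bool" where
  "in_fspan sc B x \<longleftrightarrow> (\<exists>c. x = (\<Sum>b\<in>B. sc (c b) b))"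

definition findep :: "(complex \<Rightarrow> 'a \<Rightarrow> 'a) \<Rightarrow> 'a::ab_group_add set \<Rightarrow> bool" where
  "findep sc B \<longleftrightarrow> (\<forall>c. (\<Sum>b\<in>B. sc (c b) b) = 0 \<longrightarrow> (\<forall>b\<in>B. c b = 0))"

definition fin_dim :: "(complex \<Rightarrow> 'a \<Rightarrow> 'a) \<Rightarrow> 'a::ab_group_add set \<Rightarrow> bool" where
  "fin_dim sc W \<longleftrightarrow> (\<exists>B. finite B \<and> (\<forall>w\<in>W. in_fspan sc B w))"

definition has_dim :: "(complex \<Rightarrow> 'a \<Rightarrow> 'a) \<Rightarrow> 'a::ab_group_add set \<Rightarrow> nat \<Rightarrow> bool" where
  "has_dim sc S d \<longleftrightarrow> (\<exists>B. finite B \<and> card B = d \<and> B \<subseteq> S \<and> findep sc B \<and>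
                          (\<forall>x\<in>S. in_fspan sc B x))"

definition clinear_on :: "(complex \<Rightarrow> 'a \<Rightarrow> 'a) \<Rightarrow> 'a::ab_group_add set \<Rightarrow> ('a \<Rightarrow> complex) \<Rightarrow> bool" where
  "clinear_on sc S \<phi> \<longleftrightarrow> (\<forall>x\<in>S. \<forall>y\<in>S. \<phi> (x + y) = \<phi> x + \<phi> y) \<and> (\<forall>c. \<forall>x\<in>S. \<phi> (sc c x) = c * \<phi> x)"

definition gcm :: "nat \<Rightarrow> (nat \<Rightarrow> nat \<Rightarrow> int) \<Rightarrow> bool" where
  "gcm l C \<longleftrightarrow> (\<forall>i<l. C i i = 2) \<and> (\<forall>i<l. \<forall>j<l. i \<noteq> j \<longrightarrow> C i j \<le> 0)
              \<and> (\<forall>i<l. \<forall>j<l. C i j = 0 \<longleftrightarrow> C j i = 0)"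

definition rows_indep :: "nat \<Rightarrow> (nat \<Rightarrow> nat \<Rightarrow> int) \<Rightarrow> nat set \<Rightarrow> bool" where
  "rows_indep l C S \<longleftrightarrow> (\<forall>c::nat \<Rightarrow> complex. (\<forall>j<l. (\<Sum>i\<in>S. c i * of_int (C i j)) = 0)
                            \<longrightarrow> (\<forall>i\<in>S. c i = 0))"

definition mat_rank :: "nat \<Rightarrow> (nat \<Rightarrow> nat \<Rightarrow> int) \<Rightarrow> nat" where
  "mat_rank l C = Max {card S | S. S \<subseteq> {..<l} \<and> rows_indep l C S}"

definition lie_algebra :: "(complex \<Rightarrow> 'g::ab_group_add \<Rightarrow> 'g) \<Rightarrow> ('g \<Rightarrow> 'g \<Rightarrow> 'g) \<Rightarrow> bool" where
  "lie_algebra sc br \<longleftrightarrow> vector_space sc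
     \<and> (\<forall>x y z. br (x + y) z = br x z + br y z) \<and> (\<forall>c x y. br (sc c x) y = sc c (br x y))
     \<and> (\<forall>x y z. br x (y + z) = br x y + br x z) \<and> (\<forall>c x y. br x (sc c y) = sc c (br x y))
     \<and> (\<forall>x. br x x = 0)
     \<and> (\<forall>x y z. br x (br y z) + br y (br z x) + br z (br x y) = 0)"

definition lie_subalgebra :: "(complex \<Rightarrow> 'g \<Rightarrow> 'g) \<Rightarrow> ('g \<Rightarrow> 'g \<Rightarrow> 'g) \<Rightarrow> 'g::ab_group_add set \<Rightarrow> bool" where
  "lie_subalgebra sc br S \<longleftrightarrow> csubspace sc S \<and> (\<forall>x\<in>S. \<forall>y\<in>S. br x y \<in> S)"

definition lie_ideal :: "(complex \<Rightarrow> 'g \<Rightarrow> 'g) \<Rightarrow> ('g \<Rightarrow> 'g \<Rightarrow> 'g) \<Rightarrow> 'g::ab_group_add set \<Rightarrow> bool" where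
  "lie_ideal sc br J \<longleftrightarrow> csubspace sc J \<and> (\<forall>x. \<forall>y\<in>J. br x y \<in> J)"

definition derived :: "(complex \<Rightarrow> 'g \<Rightarrow> 'g) \<Rightarrow> ('g \<Rightarrow> 'g \<Rightarrow> 'g) \<Rightarrow> 'g::ab_group_add set" where
  "derived sc br = \<Inter>{S. csubspace sc S \<and> (\<forall>x y. br x y \<in> S)}"

text \<open>The whole type 'g (with sc, br) is the Kac--Moody algebra g(C) in Kac's sense:
  (hh, al, cr) is a realization of the GCM C (hh of dimension 2l - rank C, simple roots
  al i in hh^* linearly independent, coroots cr i in hh linearly independent,
  al j (cr i) = C i j); g is generated by hh and the e i, f i subject to the defining
  relations, and g has no nonzero ideal meeting hh trivially.  This characterizes
  g(C) = g~(C)/r up to isomorphism.\<close>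
definition kac_moody ::
  "(complex \<Rightarrow> 'g::ab_group_add \<Rightarrow> 'g) \<Rightarrow> ('g \<Rightarrow> 'g \<Rightarrow> 'g) \<Rightarrow> nat \<Rightarrow> (nat \<Rightarrow> nat \<Rightarrow> int) \<Rightarrow>
   'g set \<Rightarrow> (nat \<Rightarrow> 'g \<Rightarrow> complex) \<Rightarrow> (nat \<Rightarrow> 'g) \<Rightarrow> (nat \<Rightarrow> 'g) \<Rightarrow> (nat \<Rightarrow> 'g) \<Rightarrow> bool" where
  "kac_moody sc br l C hh al cr e f \<longleftrightarrow>
     lie_algebra sc br \<and> gcm l C
     \<and> csubspace sc hh \<and> has_dim sc hh (2 * l - mat_rank l C)
     \<and> (\<forall>i<l. cr i \<in> hh) \<and> (\<forall>i<l. clinear_on sc hh (al i))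
     \<and> (\<forall>c::nat \<Rightarrow> complex. (\<Sum>i<l. sc (c i) (cr i)) = 0 \<longrightarrow> (\<forall>i<l. c i = 0))
     \<and> (\<forall>c::nat \<Rightarrow> complex. (\<forall>x\<in>hh. (\<Sum>i<l. c i * al i x) = 0) \<longrightarrow> (\<forall>i<l. c i = 0))
     \<and> (\<forall>i<l. \<forall>j<l. al j (cr i) = of_int (C i j))
     \<and> (\<forall>x\<in>hh. \<forall>y\<in>hh. br x y = 0)
     \<and> (\<forall>i<l. \<forall>j<l. br (e i) (f j) = (if i = j then cr i else 0))
     \<and> (\<forall>x\<in>hh. \<forall>i<l. br x (e i) = sc (al i x) (e i))
     \<and> (\<forall>x\<in>hh. \<forall>i<l. br x (f i) = sc (- al i x) (f i))
     \<and> (\<forall>S. lie_subalgebra sc br S \<and> hh \<subseteq> S \<and> e ` {..<l} \<subseteq> S \<and> f ` {..<l} \<subseteq> S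
            \<longrightarrow> S = UNIV)
     \<and> (\<forall>J. lie_ideal sc br J \<and> J \<inter> hh = {0} \<longrightarrow> J = {0})"

definition root_space :: "(complex \<Rightarrow> 'g::ab_group_add \<Rightarrow> 'g) \<Rightarrow> ('g \<Rightarrow> 'g \<Rightarrow> 'g) \<Rightarrow> 'g set \<Rightarrow> ('g \<Rightarrow> complex) \<Rightarrow> 'g set" where
  "root_space sc br hh \<alpha> = {x. \<forall>y\<in>hh. br y x = sc (\<alpha> y) x}"

definition nplus :: "(complex \<Rightarrow> 'g \<Rightarrow> 'g) \<Rightarrow> ('g \<Rightarrow> 'g \<Rightarrow> 'g) \<Rightarrow> nat \<Rightarrow> 'g set \<Rightarrow> (nat \<Rightarrow> 'g \<Rightarrow> complex) \<Rightarrow> 'g::ab_group_add set" where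
  "nplus sc br l hh al = \<Inter>{S. csubspace sc S \<and>
      (\<forall>k::nat \<Rightarrow> nat. (\<exists>i<l. k i \<noteq> 0) \<longrightarrow>
          root_space sc br hh (\<lambda>y. \<Sum>i<l. of_nat (k i) * al i y) \<subseteq> S)}"

text \<open>Exponent vectors m in Z^n are functions nat => int vanishing from n on.
  An element of A = C[t_1^{+-1},...,t_n^{+-1}] is a finitely supported coefficient
  function a, a = sum_m a(m) t^m.\<close>
definition expo :: "nat \<Rightarrow> (nat \<Rightarrow> int) set" where
  "expo n = {m. \<forall>i\<ge>n. m i = 0}"

definition laurent :: "nat \<Rightarrow> ((nat \<Rightarrow> int) \<Rightarrow> complex) set" where
  "laurent n = {a. finite {m. a m \<noteq> 0} \<and> {m. a m \<noteq> 0} \<subseteq> expo n}"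

definition lmult :: "((nat \<Rightarrow> int) \<Rightarrow> complex) \<Rightarrow> ((nat \<Rightarrow> int) \<Rightarrow> complex) \<Rightarrow> (nat \<Rightarrow> int) \<Rightarrow> complex" where
  "lmult a b = (\<lambda>m. \<Sum>k\<in>{k. a k \<noteq> 0}. a k * b (\<lambda>i. m i - k i))"

definition laurent_ideal :: "nat \<Rightarrow> ((nat \<Rightarrow> int) \<Rightarrow> complex) set \<Rightarrow> bool" where
  "laurent_ideal n I \<longleftrightarrow> I \<subseteq> laurent n \<and> (\<lambda>_. 0) \<in> I
     \<and> (\<forall>a\<in>I. \<forall>b\<in>I. (\<lambda>m. a m + b m) \<in> I)
     \<and> (\<forall>a\<in>laurent n. \<forall>b\<in>I. lmult a b \<in> I)"

text \<open>Co-finite: dim A/I < infinity, i.e. A is spanned modulo I by finitely many elements.\<close>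
definition cofinite_ideal :: "nat \<Rightarrow> ((nat \<Rightarrow> int) \<Rightarrow> complex) set \<Rightarrow> bool" where
  "cofinite_ideal n I \<longleftrightarrow> laurent_ideal n I \<and>
     (\<exists>B. finite B \<and> B \<subseteq> laurent n \<and>
        (\<forall>a\<in>laurent n. \<exists>c. (\<lambda>m. a m - (\<Sum>b\<in>B. c b * b m)) \<in> I))"

text \<open>A module structure on the complex vector space ('v, sv) for the Lie algebra
  G' \<otimes> A \<oplus> h'' is given by act X m (the action of X \<otimes> t^m, X in G', m in Z^n)
  and actd h (the action of h in h''); the action of a general element is the linear
  extension.\<close>
definition loop_module ::
  "(complex \<Rightarrow> 'g::ab_group_add \<Rightarrow> 'g) \<Rightarrow> ('g \<Rightarrow> 'g \<Rightarrow> 'g) \<Rightarrow> nat \<Rightarrow> 'g set \<Rightarrow>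
   (complex \<Rightarrow> 'v::ab_group_add \<Rightarrow> 'v) \<Rightarrow> ('g \<Rightarrow> (nat \<Rightarrow> int) \<Rightarrow> 'v \<Rightarrow> 'v) \<Rightarrow> ('g \<Rightarrow> 'v \<Rightarrow> 'v) \<Rightarrow> bool" where
  "loop_module sc br n h2 sv act actd \<longleftrightarrow>
     vector_space sv \<and>
     (let G1 = derived sc br in
      (\<forall>X\<in>G1. \<forall>m\<in>expo n. \<forall>v w. act X m (v + w) = act X m v + act X m w)
    \<and> (\<forall>X\<in>G1. \<forall>m\<in>expo n. \<forall>c v. act X m (sv c v) = sv c (act X m v))
    \<and> (\<forall>X\<in>G1. \<forall>Y\<in>G1. \<forall>m\<in>expo n. \<forall>v. act (X + Y) m v = act X m v + act Y m v)
    \<and> (\<forall>X\<in>G1. \<forall>m\<in>expo n. \<forall>c v. act (sc c X) m v = sv c (act X m v))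
    \<and> (\<forall>x\<in>h2. \<forall>v w. actd x (v + w) = actd x v + actd x w)
    \<and> (\<forall>x\<in>h2. \<forall>c v. actd x (sv c v) = sv c (actd x v))
    \<and> (\<forall>x\<in>h2. \<forall>y\<in>h2. \<forall>v. actd (x + y) v = actd x v + actd y v)
    \<and> (\<forall>x\<in>h2. \<forall>c v. actd (sc c x) v = sv c (actd x v))
    \<and> (\<forall>X\<in>G1. \<forall>Y\<in>G1. \<forall>m\<in>expo n. \<forall>k\<in>expo n. \<forall>v.
          act X m (act Y k v) - act Y k (act X m v) = act (br X Y) (\<lambda>i. m i + k i) v)
    \<and> (\<forall>x\<in>h2. \<forall>X\<in>G1. \<forall>m\<in>expo n. \<forall>v.
          actd x (act X m v) - act X m (actd x v) = act (br x X) m v)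
    \<and> (\<forall>x\<in>h2. \<forall>y\<in>h2. \<forall>v. actd x (actd y v) = actd y (actd x v)))"

definition irreducible_module ::
  "(complex \<Rightarrow> 'g::ab_group_add \<Rightarrow> 'g) \<Rightarrow> ('g \<Rightarrow> 'g \<Rightarrow> 'g) \<Rightarrow> nat \<Rightarrow> 'g set \<Rightarrow>
   (complex \<Rightarrow> 'v::ab_group_add \<Rightarrow> 'v) \<Rightarrow> ('g \<Rightarrow> (nat \<Rightarrow> int) \<Rightarrow> 'v \<Rightarrow> 'v) \<Rightarrow> ('g \<Rightarrow> 'v \<Rightarrow> 'v) \<Rightarrow> bool" where
  "irreducible_module sc br n h2 sv act actd \<longleftrightarrow>
     loop_module sc br n h2 sv act actd \<and> (\<exists>v::'v. v \<noteq> 0) \<and>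
     (\<forall>W. csubspace sv W \<and> (\<forall>X\<in>derived sc br. \<forall>m\<in>expo n. \<forall>w\<in>W. act X m w \<in> W)
          \<and> (\<forall>x\<in>h2. \<forall>w\<in>W. actd x w \<in> W) \<longrightarrow> W = {0} \<or> W = UNIV)"

definition weight_space ::
  "'g set \<Rightarrow> 'g set \<Rightarrow> (complex \<Rightarrow> 'v \<Rightarrow> 'v) \<Rightarrow> ('g \<Rightarrow> (nat \<Rightarrow> int) \<Rightarrow> 'v \<Rightarrow> 'v) \<Rightarrow> ('g \<Rightarrow> 'v \<Rightarrow> 'v)
   \<Rightarrow> ('g \<Rightarrow> complex) \<Rightarrow> 'v set" where
  "weight_space h1 h2 sv act actd lam =
     {v. (\<forall>x\<in>h1. act x (\<lambda>_. 0) v = sv (lam x) v) \<and> (\<forall>x\<in>h2. actd x v = sv (lam x) v)}"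

end

theory Submission
  imports Defs
begin



definition supp :: "((nat \<Rightarrow> int) \<Rightarrow> complex) \<Rightarrow> (nat \<Rightarrow> int) set" where
  "supp a = {m. a m \<noteq> 0}"

definition lsum :: "(complex \<Rightarrow> 'v::ab_group_add \<Rightarrow> 'v) \<Rightarrow> ((nat \<Rightarrow> int) \<Rightarrow> complex) \<Rightarrow> ((nat \<Rightarrow> int) \<Rightarrow> 'v) \<Rightarrow> 'v" where
  "lsum s a G = (\<Sum>m\<in>{m. a m \<noteq> 0}. s (a m) (G m))"

definition shift :: "(nat \<Rightarrow> int) \<Rightarrow> ((nat \<Rightarrow> int) \<Rightarrow> complex) \<Rightarrow> (nat \<Rightarrow> int) \<Rightarrow> complex" where
  "shift m a = (\<lambda>j. a (\<lambda>i. j i - m i))"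

definition delta :: "(nat \<Rightarrow> int) \<Rightarrow> (nat \<Rightarrow> int) \<Rightarrow> complex" where
  "delta m = (\<lambda>j. if j = m then 1 else 0)"

lemma lsum_superset:
  assumes "vector_space s" "finite S" "{m. a m \<noteq> 0} \<subseteq> S"
  shows "lsum s a G = (\<Sum>m\<in>S. s (a m) (G m))"
proof -
  interpret V: vector_space s by fact
  show ?thesis unfolding lsum_def
    by (rule sum.mono_neutral_left) (use assms in auto)
qed

lemma lsum_add:
  assumes "vector_space s" "finite {m. a m \<noteq> 0}" "finite {m. b m \<noteq> 0}"
  shows "lsum s (\<lambda>m. a m + b m) G = lsum s a G + lsum s b G"
proof -
  interpret V: vector_space s by fact
  let ?S = "{m. a m \<noteq> 0} \<union> {m. b m \<noteq> 0}"
  have f: "finite ?S" using assms by auto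
  have "lsum s (\<lambda>m. a m + b m) G = (\<Sum>m\<in>?S. s (a m + b m) (G m))"
    by (rule lsum_superset[OF assms(1) f]) auto
  also have "\<dots> = (\<Sum>m\<in>?S. s (a m) (G m)) + (\<Sum>m\<in>?S. s (b m) (G m))"
    by (simp add: V.scale_left_distrib sum.distrib)
  also have "\<dots> = lsum s a G + lsum s b G"
    using lsum_superset[OF assms(1) f, of a G] lsum_superset[OF assms(1) f, of b G] by auto
  finally show ?thesis .
qed

lemma lsum_scale:
  assumes "vector_space s"
  shows "lsum s (\<lambda>m. c * a m) G = s c (lsum s a G)"
proof -
  interpret V: vector_space s by fact
  show ?thesis
  proof (cases "c = 0")
    case True then show ?thesis by (simp add: lsum_def)
  next
    case False
    then have "{m. c * a m \<noteq> 0} = {m. a m \<noteq> 0}" by auto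
    then show ?thesis by (simp add: lsum_def V.scale_sum_right)
  qed
qed

lemma lsum_zero_fun[simp]: "lsum s (\<lambda>m. 0) G = 0"
  by (simp add: lsum_def)

lemma lsum_sum:
  assumes "vector_space s" "finite K" "\<And>k. k \<in> K \<Longrightarrow> finite {m. g k m \<noteq> 0}"
  shows "lsum s (\<lambda>m. \<Sum>k\<in>K. g k m) G = (\<Sum>k\<in>K. lsum s (g k) G)"
  using assms(2,3)
proof (induction K rule: finite_induct)
  case empty
  then show ?case by simp
next
  case (insert x F)
  have fin: "finite {m. (\<Sum>k\<in>F. g k m) \<noteq> 0}"
  proof (rule finite_subset)
    show "{m. (\<Sum>k\<in>F. g k m) \<noteq> 0} \<subseteq> (\<Union>k\<in>F. {m. g k m \<noteq> 0})"
      by (auto intro: ccontr simp: sum.neutral)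
    show "finite (\<Union>k\<in>F. {m. g k m \<noteq> 0})" using insert by auto
  qed
  have "lsum s (\<lambda>m. \<Sum>k\<in>insert x F. g k m) G = lsum s (\<lambda>m. g x m + (\<Sum>k\<in>F. g k m)) G"
    using insert by simp
  also have "\<dots> = lsum s (g x) G + lsum s (\<lambda>m. \<Sum>k\<in>F. g k m) G"
    by (rule lsum_add[OF assms(1)]) (use insert fin in auto)
  finally show ?case using insert by simp
qed

lemma lsum_G_add:
  assumes "vector_space s"
  shows "lsum s a (\<lambda>m. G m + H m) = lsum s a G + lsum s a H"
proof -
  interpret V: vector_space s by fact
  show ?thesis by (simp add: lsum_def V.scale_right_distrib sum.distrib)
qed

lemma lsum_G_scale:
  assumes "vector_space s"
  shows "lsum s a (\<lambda>m. s c (G m)) = s c (lsum s a G)"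
proof -
  interpret V: vector_space s by fact
  show ?thesis by (simp add: lsum_def V.scale_sum_right mult.commute)
qed

lemma lsum_G_zero[simp]:
  assumes "vector_space s"
  shows "lsum s a (\<lambda>m. 0) = 0"
proof -
  interpret V: vector_space s by fact
  show ?thesis by (simp add: lsum_def)
qed

lemma lsum_G_sum:
  assumes "vector_space s" "finite K"
  shows "lsum s a (\<lambda>m. \<Sum>k\<in>K. G k m) = (\<Sum>k\<in>K. lsum s a (G k))"
  using assms(2) by (induction K rule: finite_induct) (simp_all add: lsum_G_add[OF assms(1)] lsum_G_zero[OF assms(1)])

lemma lsum_G_cong:
  assumes "\<And>m. a m \<noteq> 0 \<Longrightarrow> G m = H m"
  shows "lsum s a G = lsum s a H"
  unfolding lsum_def using assms by (intro sum.cong) auto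

lemma lsum_delta:
  assumes "vector_space s"
  shows "lsum s (delta m) G = G m"
proof -
  interpret V: vector_space s by fact
  have "{j. delta m j \<noteq> 0} = {m}" by (auto simp: delta_def)
  then show ?thesis by (simp add: lsum_def delta_def)
qed

lemma lsum_op:
  assumes "vector_space s" and add: "\<And>x y. T (x + y) = T x + T y" and sc: "\<And>c x. T (s c x) = s c (T x)"
  shows "T (lsum s a G) = lsum s a (\<lambda>m. T (G m))"
proof -
  interpret A: additive T by standard (rule add)
  show ?thesis unfolding lsum_def by (simp add: A.sum sc)
qed

lemma supp_shift: "{j. shift m a j \<noteq> 0} = (\<lambda>k. (\<lambda>i. m i + k i)) ` {k. a k \<noteq> 0}"
proof (rule set_eqI, rule iffI)
  fix j assume "j \<in> {j. shift m a j \<noteq> 0}"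
  then have "a (\<lambda>i. j i - m i) \<noteq> 0" by (simp add: shift_def)
  moreover have "j = (\<lambda>i. m i + (\<lambda>i. j i - m i) i)" by auto
  ultimately show "j \<in> (\<lambda>k. (\<lambda>i. m i + k i)) ` {k. a k \<noteq> 0}"
    by (intro image_eqI[where x="\<lambda>i. j i - m i"]) auto
next
  fix j assume "j \<in> (\<lambda>k. (\<lambda>i. m i + k i)) ` {k. a k \<noteq> 0}"
  then obtain k where k: "a k \<noteq> 0" "j = (\<lambda>i. m i + k i)" by blast
  have "(\<lambda>i. j i - m i) = k" using k(2) by auto
  then show "j \<in> {j. shift m a j \<noteq> 0}" using k by (simp add: shift_def)
qed

lemma lsum_shift:
  "lsum s (shift m a) G = lsum s a (\<lambda>k. G (\<lambda>i. m i + k i))"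
proof -
  have inj: "inj_on (\<lambda>k. (\<lambda>i. m i + k i)) X" for X :: "(nat \<Rightarrow> int) set"
  proof (rule inj_onI)
    fix x y :: "nat \<Rightarrow> int" assume "(\<lambda>i. m i + x i) = (\<lambda>i. m i + y i)"
    then have "m i + x i = m i + y i" for i by metis
    then show "x = y" by auto
  qed
  have e: "shift m a (\<lambda>i. m i + k i) = a k" for k
  proof -
    have "(\<lambda>i. (m i + k i) - m i) = k" by auto
    then show ?thesis by (simp add: shift_def)
  qed
  have "lsum s (shift m a) G = (\<Sum>j\<in>(\<lambda>k. (\<lambda>i. m i + k i)) ` {k. a k \<noteq> 0}. s (shift m a j) (G j))"
    unfolding lsum_def supp_shift ..
  also have "\<dots> = (\<Sum>k\<in>{k. a k \<noteq> 0}. s (shift m a (\<lambda>i. m i + k i)) (G (\<lambda>i. m i + k i)))"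
    by (rule sum.reindex[OF inj, unfolded comp_def])
  also have "\<dots> = lsum s a (\<lambda>k. G (\<lambda>i. m i + k i))"
    unfolding lsum_def e ..
  finally show ?thesis .
qed

lemma lsum_lin_comb:
  assumes "vector_space s" "finite B" "\<And>b. b \<in> B \<Longrightarrow> finite {m. b m \<noteq> 0}"
    "finite {m. a m \<noteq> 0}"
  shows "lsum s (\<lambda>m. a m - (\<Sum>b\<in>B. c b * b m)) G = lsum s a G - (\<Sum>b\<in>B. s (c b) (lsum s b G))"
proof -
  interpret V: vector_space s by fact
  let ?g = "\<lambda>k m. (if k = None then a m else - c (the k) * the k m)"
  let ?K = "insert None (Some ` B)"
  have fK: "finite ?K" using assms by auto
  have eq: "(\<lambda>m. a m - (\<Sum>b\<in>B. c b * b m)) = (\<lambda>m. \<Sum>k\<in>?K. ?g k m)"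
  proof (rule ext)
    fix m
    have "(\<Sum>k\<in>?K. ?g k m) = a m + (\<Sum>k\<in>Some ` B. ?g k m)"
      by (subst sum.insert) (use assms in auto)
    also have "(\<Sum>k\<in>Some ` B. ?g k m) = (\<Sum>b\<in>B. - c b * b m)"
      by (subst sum.reindex) (auto simp: inj_on_def)
    finally show "a m - (\<Sum>b\<in>B. c b * b m) = (\<Sum>k\<in>?K. ?g k m)"
      by (simp add: sum_negf)
  qed
  have fin: "finite {m. ?g k m \<noteq> 0}" if "k \<in> ?K" for k
  proof (cases k)
    case None then show ?thesis using assms by simp
  next
    case (Some b)
    then have "b \<in> B" using that by auto
    then show ?thesis using assms(3)[of b] Some by (auto intro: finite_subset)
  qed
  have "lsum s (\<lambda>m. a m - (\<Sum>b\<in>B. c b * b m)) G = (\<Sum>k\<in>?K. lsum s (?g k) G)"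
    unfolding eq by (rule lsum_sum[OF assms(1) fK fin])
  also have "\<dots> = lsum s a G + (\<Sum>k\<in>Some ` B. lsum s (?g k) G)"
    by (subst sum.insert) (use assms in auto)
  also have "(\<Sum>k\<in>Some ` B. lsum s (?g k) G) = (\<Sum>b\<in>B. lsum s (\<lambda>m. (- c b) * b m) G)"
    by (simp add: sum.reindex)
  also have "\<dots> = - (\<Sum>b\<in>B. s (c b) (lsum s b G))"
  proof -
    have "lsum s (\<lambda>m. (- c b) * b m) G = - s (c b) (lsum s b G)" for b
      by (subst lsum_scale[OF assms(1)]) simp
    then show ?thesis by (simp add: sum_negf)
  qed
  finally show ?thesis by simp
qed




lemma indep_weights:
  assumes VS: "vector_space s"
    and add: "\<And>h x y. h \<in> H \<Longrightarrow> T h (x + y) = T h x + T h y"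
    and hom: "\<And>h c x. h \<in> H \<Longrightarrow> T h (s c x) = s c (T h x)"
    and fin: "finite S"
    and w0: "\<And>h. h \<in> H \<Longrightarrow> T h w0 = s (mb h) w0"
    and gw: "\<And>j h. j \<in> S \<Longrightarrow> h \<in> H \<Longrightarrow> T h (g j) = s (\<mu> j h) (g j)"
    and gd: "\<And>j. j \<in> S \<Longrightarrow> \<exists>h\<in>H. \<mu> j h \<noteq> mb h"
    and sum0: "w0 + sum g S = 0"
  shows "w0 = 0"
  using fin w0 gw gd sum0
proof (induction S arbitrary: w0 g rule: finite_induct)
  case empty
  then show ?case by simp
next
  case (insert j S)
  interpret V: vector_space s by (rule VS)
  obtain h where h: "h \<in> H" "\<mu> j h \<noteq> mb h" using insert.prems(3)[of j] by auto
  interpret A: additive "T h" by standard (rule add[OF h(1)])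
  let ?d = "mb h - \<mu> j h"
  let ?g = "\<lambda>i. s (\<mu> i h - \<mu> j h) (g i)"
  have e0: "w0 + g j + sum g S = 0" using insert by (simp add: add.assoc)
  have "T h (w0 + g j + sum g S) - s (\<mu> j h) (w0 + g j + sum g S) = 0"
    by (simp add: e0 A.zero)
  also have "T h (w0 + g j + sum g S) = s (mb h) w0 + s (\<mu> j h) (g j) + (\<Sum>i\<in>S. s (\<mu> i h) (g i))"
    using insert.prems(1)[OF h(1)] insert.prems(2)[OF _ h(1)] by (simp add: A.add A.sum)
  finally have "s ?d w0 + sum ?g S = 0"
    by (simp add: V.scale_right_distrib V.scale_left_diff_distrib V.scale_sum_right sum_subtractf algebra_simps)
  moreover have "T h' (s ?d w0) = s (mb h') (s ?d w0)" if "h' \<in> H" for h'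
    using insert.prems(1)[OF that] hom[OF that] by (simp add: mult.commute)
  moreover have "T h' (?g i) = s (\<mu> i h') (?g i)" if "i \<in> S" "h' \<in> H" for i h'
    using insert.prems(2)[of i h'] hom[OF that(2)] that by (simp add: mult.commute)
  moreover have "\<exists>h\<in>H. \<mu> i h \<noteq> mb h" if "i \<in> S" for i using insert.prems(3) that by auto
  ultimately have "s ?d w0 = 0"
    using insert.IH[of "s ?d w0" ?g] by blast
  then show ?case using h(2) by simp
qed

lemma cofinite_kernel:
  assumes VS: "vector_space s" and finB: "finite Bw"
    and img: "\<And>a. a \<in> laurent n \<Longrightarrow> lsum s a G \<in> module.span s Bw"
  shows "\<exists>B'. finite B' \<and> B' \<subseteq> laurent n \<and>
     (\<forall>a\<in>laurent n. \<exists>c. lsum s (\<lambda>m. a m - (\<Sum>b\<in>B'. c b * b m)) G = 0)"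
proof -
  interpret V: vector_space s by (rule VS)
  let ?U = "(\<lambda>a. lsum s a G) ` laurent n"
  obtain Bu where Bu: "Bu \<subseteq> ?U" "V.independent Bu" "?U \<subseteq> V.span Bu" "card Bu = V.dim ?U"
    by (rule V.basis_exists)
  have "?U \<subseteq> V.span Bw"
  proof
    fix u assume "u \<in> ?U"
    then obtain a where "a \<in> laurent n" "u = lsum s a G" by (rule imageE)
    then show "u \<in> V.span Bw" using img by simp
  qed
  then have "Bu \<subseteq> V.span Bw" using Bu(1) by (rule order_trans[rotated])
  then have fBu: "finite Bu"
    using V.independent_span_bound[OF finB Bu(2)] by simp
  define pre where "pre u = (SOME a. a \<in> laurent n \<and> lsum s a G = u)" for u
  have pre: "pre u \<in> laurent n \<and> lsum s (pre u) G = u" if "u \<in> Bu" for u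
  proof -
    have "u \<in> ?U" by (rule subsetD[OF Bu(1) that])
    then obtain a where "a \<in> laurent n" "lsum s a G = u" by auto
    then have "\<exists>a. a \<in> laurent n \<and> lsum s a G = u" by blast
    then show ?thesis unfolding pre_def by (rule someI_ex)
  qed
  have injpre: "inj_on pre Bu"
  proof (rule inj_onI)
    fix x y assume xy: "x \<in> Bu" "y \<in> Bu" "pre x = pre y"
    have 1: "lsum s (pre x) G = x" using pre[OF xy(1)] by (rule conjunct2)
    have 2: "lsum s (pre y) G = y" using pre[OF xy(2)] by (rule conjunct2)
    show "x = y" using 1 2 xy(3) by argo
  qed
  show ?thesis
  proof (rule exI[of _ "pre ` Bu"], intro conjI ballI)
    show "finite (pre ` Bu)" using fBu by simp
    show "pre ` Bu \<subseteq> laurent n" using pre by auto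
    fix a assume a: "a \<in> laurent n"
    then have "lsum s a G \<in> V.span Bu" using Bu(3) by blast
    then obtain r where r: "lsum s a G = (\<Sum>u\<in>Bu. s (r u) u)"
      using V.span_finite[OF fBu] by auto
    let ?c = "\<lambda>b. r (lsum s b G)"
    have fins: "finite {m. b m \<noteq> 0}" if "b \<in> pre ` Bu" for b
      using that pre unfolding laurent_def by auto
    have "lsum s (\<lambda>m. a m - (\<Sum>b\<in>pre ` Bu. ?c b * b m)) G
          = lsum s a G - (\<Sum>b\<in>pre ` Bu. s (?c b) (lsum s b G))"
      by (rule lsum_lin_comb[OF VS]) (use fBu fins a in \<open>auto simp: laurent_def\<close>)
    also have "(\<Sum>b\<in>pre ` Bu. s (?c b) (lsum s b G)) = (\<Sum>u\<in>Bu. s (r u) u)"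
      by (subst sum.reindex[OF injpre]) (simp add: pre)
    finally show "\<exists>c. lsum s (\<lambda>m. a m - (\<Sum>b\<in>pre ` Bu. c b * b m)) G = 0"
      using r by auto
  qed
qed




locale KMS =
  fixes sc :: "complex \<Rightarrow> 'g::ab_group_add \<Rightarrow> 'g" and br :: "'g \<Rightarrow> 'g \<Rightarrow> 'g"
    and l :: nat and C :: "nat \<Rightarrow> nat \<Rightarrow> int" and hh :: "'g set"
    and al :: "nat \<Rightarrow> 'g \<Rightarrow> complex" and cr e f :: "nat \<Rightarrow> 'g"
    and h2 :: "'g set" and n :: nat
    and psi1 :: "'g \<Rightarrow> (nat \<Rightarrow> int) \<Rightarrow> complex" and psi2 :: "'g \<Rightarrow> complex"
    and sv :: "complex \<Rightarrow> 'v::ab_group_add \<Rightarrow> 'v"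
    and act :: "'g \<Rightarrow> (nat \<Rightarrow> int) \<Rightarrow> 'v \<Rightarrow> 'v" and actd :: "'g \<Rightarrow> 'v \<Rightarrow> 'v"
    and v0 :: 'v
  assumes KM: "kac_moody sc br l C hh al cr e f"
    and h2_sub: "csubspace sc h2" "h2 \<subseteq> hh"
    and h2_compl: "(hh \<inter> derived sc br) \<inter> h2 = {0}"
                  "\<forall>x\<in>hh. \<exists>a\<in>hh \<inter> derived sc br. \<exists>b\<in>h2. x = a + b"
    and psi_lin: "\<forall>m\<in>expo n. clinear_on sc (hh \<inter> derived sc br) (\<lambda>x. psi1 x m)"
                 "clinear_on sc h2 psi2"
    and irr: "irreducible_module sc br n h2 sv act actd"
    and hw: "v0 \<noteq> 0"
            "\<forall>X\<in>nplus sc br l hh al. \<forall>m\<in>expo n. act X m v0 = 0"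
            "\<forall>x\<in>hh \<inter> derived sc br. \<forall>m\<in>expo n. act x m v0 = sv (psi1 x m) v0"
            "\<forall>x\<in>h2. actd x v0 = sv (psi2 x) v0"
begin

abbreviation "D \<equiv> derived sc br"
abbreviation "h1 \<equiv> hh \<inter> D"
abbreviation "EE \<equiv> expo n"

lemma LA: "lie_algebra sc br" using KM unfolding kac_moody_def by (elim conjE) assumption

lemma VSg: "vector_space sc" using LA by (simp add: lie_algebra_def)

lemma LM: "loop_module sc br n h2 sv act actd" using irr unfolding irreducible_module_def by (elim conjE) assumption

lemma VSv: "vector_space sv" using LM unfolding loop_module_def by (elim conjE) assumption

end

sublocale KMS \<subseteq> G: vector_space sc by (rule VSg)
sublocale KMS \<subseteq> V: vector_space sv by (rule VSv)

context KMS begin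

lemma br_addL: "br (x + y) z = br x z + br y z" using LA by (simp add: lie_algebra_def)
lemma br_addR: "br x (y + z) = br x y + br x z" using LA by (simp add: lie_algebra_def)
lemma br_scL: "br (sc c x) y = sc c (br x y)" using LA by (simp add: lie_algebra_def)
lemma br_scR: "br x (sc c y) = sc c (br x y)" using LA by (simp add: lie_algebra_def)
lemma br_self: "br x x = 0" using LA by (simp add: lie_algebra_def)
lemma jacobi: "br x (br y z) + br y (br z x) + br z (br x y) = 0" using LA by (simp add: lie_algebra_def)

lemma br_0L[simp]: "br 0 y = 0"
  using br_addL[of 0 0 y] by simp
lemma br_0R[simp]: "br x 0 = 0"
  using br_addR[of x 0 0] by simp
lemma br_anti: "br x y = - br y x"
proof -
  have "0 = br (x + y) (x + y)" by (simp add: br_self)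
  also have "\<dots> = br x x + br x y + (br y x + br y y)" by (rule trans[OF br_addL]) (simp only: br_addR)
  also have "\<dots> = br x y + br y x" by (simp add: br_self)
  finally have "br x y + br y x = 0" by (rule sym)
  then show ?thesis by (simp add: eq_neg_iff_add_eq_0)
qed
lemma br_negL: "br (- x) y = - br x y"
  using br_addL[of x "- x" y] by (simp add: eq_neg_iff_add_eq_0 add.commute)
lemma br_negR: "br x (- y) = - br x y"
  using br_addR[of x y "- y"] by (simp add: eq_neg_iff_add_eq_0 add.commute)
lemma br_diffL: "br (x - y) z = br x z - br y z"
  using br_addL[of x "- y" z] by (simp add: br_negL)
lemma br_diffR: "br x (y - z) = br x y - br x z"
  using br_addR[of x y "- z"] by (simp add: br_negR)
lemma br_jac: "br (br a b) c = br a (br b c) - br b (br a c)"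
proof -
  have "br a (br b c) + br b (br c a) + br c (br a b) = 0" by (rule jacobi)
  moreover have "br c (br a b) = - br (br a b) c" by (rule br_anti)
  moreover have "br b (br c a) = - br b (br a c)" by (subst br_anti[of c a]) (simp add: br_negR)
  ultimately show ?thesis by (simp add: algebra_simps eq_neg_iff_add_eq_0)
qed
lemma br_der: "br a (br b c) = br (br a b) c + br b (br a c)"
  by (simp add: br_jac)

lemma cs_0: "csubspace s S \<Longrightarrow> 0 \<in> S" by (simp add: csubspace_def)
lemma cs_add: "csubspace s S \<Longrightarrow> x \<in> S \<Longrightarrow> y \<in> S \<Longrightarrow> x + y \<in> S" by (simp add: csubspace_def)
lemma cs_sc: "csubspace s S \<Longrightarrow> x \<in> S \<Longrightarrow> s c x \<in> S" by (simp add: csubspace_def)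

lemma csg_neg: "csubspace sc S \<Longrightarrow> x \<in> S \<Longrightarrow> - x \<in> S"
  using cs_sc[of sc S x "-1"] by simp
lemma csg_diff: "csubspace sc S \<Longrightarrow> x \<in> S \<Longrightarrow> y \<in> S \<Longrightarrow> x - y \<in> S"
  using cs_add[of sc S x "- y"] csg_neg[of S y] by simp
lemma csg_sum: "csubspace sc S \<Longrightarrow> (\<And>i. i \<in> I \<Longrightarrow> g i \<in> S) \<Longrightarrow> sum g I \<in> S"
  by (induction I rule: infinite_finite_induct) (auto intro: cs_add cs_0)
lemma csg_eq: "csubspace sc S \<longleftrightarrow> G.subspace S"
  unfolding csubspace_def G.subspace_def by auto
lemma csv_eq: "csubspace sv S \<longleftrightarrow> V.subspace S"
  unfolding csubspace_def V.subspace_def by auto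

lemma D_sub: "csubspace sc D"
  unfolding derived_def csubspace_def by auto
lemma br_D: "br x y \<in> D"
  unfolding derived_def by auto

lemma hh_sub: "csubspace sc hh" using KM by (simp add: kac_moody_def)
lemma h1_sub: "csubspace sc h1" using hh_sub D_sub by (auto simp: csubspace_def)
lemma cr_hh: "i < l \<Longrightarrow> cr i \<in> hh" using KM by (simp add: kac_moody_def)
lemma al_lin: "i < l \<Longrightarrow> clinear_on sc hh (al i)" using KM by (simp add: kac_moody_def)
lemma al_indep0: "\<forall>c::nat\<Rightarrow>complex. (\<forall>x\<in>hh. (\<Sum>i<l. c i * al i x) = 0) \<longrightarrow> (\<forall>i<l. c i = 0)"
  using KM unfolding kac_moody_def by (elim conjE) assumption
lemma al_indep: "(\<forall>x\<in>hh. (\<Sum>i<l. c i * al i x) = 0) \<Longrightarrow> i < l \<Longrightarrow> c i = 0"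
  using al_indep0 by simp
lemma hh_ab: "x \<in> hh \<Longrightarrow> y \<in> hh \<Longrightarrow> br x y = 0" using KM by (simp add: kac_moody_def)
lemma br_ef: "i < l \<Longrightarrow> j < l \<Longrightarrow> br (e i) (f j) = (if i = j then cr i else 0)"
  using KM by (simp add: kac_moody_def)
lemma br_he: "x \<in> hh \<Longrightarrow> i < l \<Longrightarrow> br x (e i) = sc (al i x) (e i)"
  using KM by (simp add: kac_moody_def)
lemma br_hf: "x \<in> hh \<Longrightarrow> i < l \<Longrightarrow> br x (f i) = sc (- al i x) (f i)"
  using KM by (simp add: kac_moody_def)
lemma gen0: "\<forall>S. lie_subalgebra sc br S \<and> hh \<subseteq> S \<and> e ` {..<l} \<subseteq> S \<and> f ` {..<l} \<subseteq> S
            \<longrightarrow> S = UNIV"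
  using KM unfolding kac_moody_def by (elim conjE) assumption
lemma gen: "lie_subalgebra sc br S \<Longrightarrow> hh \<subseteq> S \<Longrightarrow> e ` {..<l} \<subseteq> S \<Longrightarrow> f ` {..<l} \<subseteq> S \<Longrightarrow> S = UNIV"
  using gen0 by simp

lemma al_add: "i < l \<Longrightarrow> x \<in> hh \<Longrightarrow> y \<in> hh \<Longrightarrow> al i (x + y) = al i x + al i y"
  using al_lin by (simp add: clinear_on_def)
lemma al_sc: "i < l \<Longrightarrow> x \<in> hh \<Longrightarrow> al i (sc c x) = c * al i x"
  using al_lin by (simp add: clinear_on_def)
lemma al_0: "i < l \<Longrightarrow> al i 0 = 0"
  using al_sc[of i 0 0] cs_0[OF hh_sub] by simp

lemma al_nonzero: assumes "i < l" shows "\<exists>x\<in>hh. al i x \<noteq> 0"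
proof (rule ccontr)
  assume "\<not> ?thesis"
  have e: "(\<Sum>j<l. (if j = i then 1 else 0) * al j x) = al i x" for x
  proof -
    have "(\<Sum>j<l. (if j = i then 1 else 0) * al j x) = (\<Sum>j<l. if j = i then al j x else 0)"
      by (rule sum.cong) auto
    also have "\<dots> = al i x" using assms by simp
    finally show ?thesis .
  qed
  from \<open>\<not> ?thesis\<close> have "\<forall>x\<in>hh. (\<Sum>j<l. (if j = i then 1 else 0) * al j x) = 0"
    by (simp add: e)
  from al_indep[OF this assms] show False by simp
qed

lemma rootvec_D: assumes "x \<in> hh" "br x y = sc c y" "c \<noteq> 0" shows "y \<in> D"
proof -
  have "y = sc (1 / c) (br x y)" using assms by simp
  then show ?thesis using cs_sc[OF D_sub br_D, of "1/c" x y] by simp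
qed

lemma e_D: "i < l \<Longrightarrow> e i \<in> D"
proof -
  assume i: "i < l"
  then obtain x where "x \<in> hh" "al i x \<noteq> 0" using al_nonzero by blast
  then show ?thesis using br_he[OF _ i] rootvec_D[of x "e i" "al i x"] by simp
qed
lemma f_D: "i < l \<Longrightarrow> f i \<in> D"
proof -
  assume i: "i < l"
  then obtain x where "x \<in> hh" "al i x \<noteq> 0" using al_nonzero by blast
  then show ?thesis using br_hf[OF _ i] rootvec_D[of x "f i" "- al i x"] by simp
qed
lemma cr_D: "i < l \<Longrightarrow> cr i \<in> D"
  using br_ef[of i i] br_D[of "e i" "f i"] by simp
lemma cr_h1: "i < l \<Longrightarrow> cr i \<in> h1" using cr_D cr_hh by simp

lemma h2_hh: "x \<in> h2 \<Longrightarrow> x \<in> hh" using h2_sub by auto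

lemma expo_add: "m \<in> EE \<Longrightarrow> k \<in> EE \<Longrightarrow> (\<lambda>i. m i + k i) \<in> EE"
  by (simp add: expo_def)
lemma expo_0: "(\<lambda>i. 0) \<in> EE" by (simp add: expo_def)

lemma LMc: "(\<forall>X\<in>D. \<forall>m\<in>EE. \<forall>v w. act X m (v + w) = act X m v + act X m w)
    \<and> (\<forall>X\<in>D. \<forall>m\<in>EE. \<forall>c v. act X m (sv c v) = sv c (act X m v))
    \<and> (\<forall>X\<in>D. \<forall>Y\<in>D. \<forall>m\<in>EE. \<forall>v. act (X + Y) m v = act X m v + act Y m v)
    \<and> (\<forall>X\<in>D. \<forall>m\<in>EE. \<forall>c v. act (sc c X) m v = sv c (act X m v))
    \<and> (\<forall>x\<in>h2. \<forall>v w. actd x (v + w) = actd x v + actd x w)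
    \<and> (\<forall>x\<in>h2. \<forall>c v. actd x (sv c v) = sv c (actd x v))
    \<and> (\<forall>x\<in>h2. \<forall>y\<in>h2. \<forall>v. actd (x + y) v = actd x v + actd y v)
    \<and> (\<forall>x\<in>h2. \<forall>c v. actd (sc c x) v = sv c (actd x v))
    \<and> (\<forall>X\<in>D. \<forall>Y\<in>D. \<forall>m\<in>EE. \<forall>k\<in>EE. \<forall>v.
          act X m (act Y k v) - act Y k (act X m v) = act (br X Y) (\<lambda>i. m i + k i) v)
    \<and> (\<forall>x\<in>h2. \<forall>X\<in>D. \<forall>m\<in>EE. \<forall>v.
          actd x (act X m v) - act X m (actd x v) = act (br x X) m v)"
  using LM unfolding loop_module_def Let_def by (elim conjE) (intro conjI; assumption)

lemma act_addv: "X \<in> D \<Longrightarrow> m \<in> EE \<Longrightarrow> act X m (v + w) = act X m v + act X m w"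
  using LMc[THEN conjunct1] by simp
lemma act_scv: "X \<in> D \<Longrightarrow> m \<in> EE \<Longrightarrow> act X m (sv c v) = sv c (act X m v)"
  using LMc[THEN conjunct2, THEN conjunct1] by simp
lemma act_addX: "X \<in> D \<Longrightarrow> Y \<in> D \<Longrightarrow> m \<in> EE \<Longrightarrow> act (X + Y) m v = act X m v + act Y m v"
  using LMc[THEN conjunct2, THEN conjunct2, THEN conjunct1] by simp
lemma act_scX: "X \<in> D \<Longrightarrow> m \<in> EE \<Longrightarrow> act (sc c X) m v = sv c (act X m v)"
  using LMc[THEN conjunct2, THEN conjunct2, THEN conjunct2, THEN conjunct1] by simp
lemma actd_addv: "x \<in> h2 \<Longrightarrow> actd x (v + w) = actd x v + actd x w"
  using LMc[THEN conjunct2, THEN conjunct2, THEN conjunct2, THEN conjunct2, THEN conjunct1] by simp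
lemma actd_scv: "x \<in> h2 \<Longrightarrow> actd x (sv c v) = sv c (actd x v)"
  using LMc[THEN conjunct2, THEN conjunct2, THEN conjunct2, THEN conjunct2, THEN conjunct2, THEN conjunct1] by simp
lemma actd_addX: "x \<in> h2 \<Longrightarrow> y \<in> h2 \<Longrightarrow> actd (x + y) v = actd x v + actd y v"
  using LMc[THEN conjunct2, THEN conjunct2, THEN conjunct2, THEN conjunct2, THEN conjunct2, THEN conjunct2, THEN conjunct1] by simp
lemma actd_scX: "x \<in> h2 \<Longrightarrow> actd (sc c x) v = sv c (actd x v)"
  using LMc[THEN conjunct2, THEN conjunct2, THEN conjunct2, THEN conjunct2, THEN conjunct2, THEN conjunct2, THEN conjunct2, THEN conjunct1] by simp
lemma act_comm0: "X \<in> D \<Longrightarrow> Y \<in> D \<Longrightarrow> m \<in> EE \<Longrightarrow> k \<in> EE \<Longrightarrow>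
    act X m (act Y k v) - act Y k (act X m v) = act (br X Y) (\<lambda>i. m i + k i) v"
  using LMc[THEN conjunct2, THEN conjunct2, THEN conjunct2, THEN conjunct2, THEN conjunct2, THEN conjunct2, THEN conjunct2, THEN conjunct2, THEN conjunct1] by simp
lemma act_comm: "X \<in> D \<Longrightarrow> Y \<in> D \<Longrightarrow> m \<in> EE \<Longrightarrow> k \<in> EE \<Longrightarrow>
    act X m (act Y k v) = act Y k (act X m v) + act (br X Y) (\<lambda>i. m i + k i) v"
  using act_comm0[of X Y m k v] by (simp add: diff_eq_eq add.commute)
lemma actd_comm0: "x \<in> h2 \<Longrightarrow> X \<in> D \<Longrightarrow> m \<in> EE \<Longrightarrow>
    actd x (act X m v) - act X m (actd x v) = act (br x X) m v"
  using LMc[THEN conjunct2, THEN conjunct2, THEN conjunct2, THEN conjunct2, THEN conjunct2, THEN conjunct2, THEN conjunct2, THEN conjunct2, THEN conjunct2] by simp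
lemma actd_comm: "x \<in> h2 \<Longrightarrow> X \<in> D \<Longrightarrow> m \<in> EE \<Longrightarrow>
    actd x (act X m v) = act X m (actd x v) + act (br x X) m v"
  using actd_comm0[of x X m v] by (simp add: diff_eq_eq add.commute)

lemma act_0v[simp]: "X \<in> D \<Longrightarrow> m \<in> EE \<Longrightarrow> act X m 0 = 0"
  using act_addv[of X m 0 0] by simp
lemma act_0X[simp]: "m \<in> EE \<Longrightarrow> act 0 m v = 0"
  using act_scX[of 0 m 0 v] cs_0[OF D_sub] by simp
lemma actd_0v[simp]: "x \<in> h2 \<Longrightarrow> actd x 0 = 0"
  using actd_addv[of x 0 0] by simp
lemma actd_0X[simp]: "actd 0 v = 0"
  using actd_scX[of 0 0 v] cs_0[OF h2_sub(1)] by simp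

lemma act_sumv: "X \<in> D \<Longrightarrow> m \<in> EE \<Longrightarrow> act X m (sum g I) = (\<Sum>i\<in>I. act X m (g i))"
  by (induction I rule: infinite_finite_induct) (simp_all add: act_addv)
lemma actd_sumv: "x \<in> h2 \<Longrightarrow> actd x (sum g I) = (\<Sum>i\<in>I. actd x (g i))"
  by (induction I rule: infinite_finite_induct) (simp_all add: actd_addv)

lemma irr_W: "csubspace sv W \<Longrightarrow> (\<forall>X\<in>D. \<forall>m\<in>EE. \<forall>w\<in>W. act X m w \<in> W) \<Longrightarrow>
    (\<forall>x\<in>h2. \<forall>w\<in>W. actd x w \<in> W) \<Longrightarrow> W = {0} \<or> W = UNIV"
proof -
  have "\<forall>W. csubspace sv W \<and> (\<forall>X\<in>derived sc br. \<forall>m\<in>expo n. \<forall>w\<in>W. act X m w \<in> W)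
          \<and> (\<forall>x\<in>h2. \<forall>w\<in>W. actd x w \<in> W) \<longrightarrow> W = {0} \<or> W = UNIV"
    using irr unfolding irreducible_module_def by (elim conjE) assumption
  then show "csubspace sv W \<Longrightarrow> (\<forall>X\<in>D. \<forall>m\<in>EE. \<forall>w\<in>W. act X m w \<in> W) \<Longrightarrow>
    (\<forall>x\<in>h2. \<forall>w\<in>W. actd x w \<in> W) \<Longrightarrow> W = {0} \<or> W = UNIV" by simp
qed

lemma hw_h1: "x \<in> h1 \<Longrightarrow> m \<in> EE \<Longrightarrow> act x m v0 = sv (psi1 x m) v0" using hw(3) by simp
lemma hw_h2: "x \<in> h2 \<Longrightarrow> actd x v0 = sv (psi2 x) v0" using hw(4) by simp

end



definition ssum :: "'a::ab_group_add set \<Rightarrow> 'a set \<Rightarrow> 'a set" where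
  "ssum A B = {a + b | a b. a \<in> A \<and> b \<in> B}"

lemma ssumI: "a \<in> A \<Longrightarrow> b \<in> B \<Longrightarrow> a + b \<in> ssum A B"
  unfolding ssum_def by blast
lemma ssumE: "x \<in> ssum A B \<Longrightarrow> (\<And>a b. a \<in> A \<Longrightarrow> b \<in> B \<Longrightarrow> x = a + b \<Longrightarrow> P) \<Longrightarrow> P"
  unfolding ssum_def by blast

lemma ssum_cs:
  assumes VS: "vector_space s" and A: "csubspace s A" and B: "csubspace s B"
  shows "csubspace s (ssum A B)"
proof -
  interpret V: vector_space s by fact
  show ?thesis unfolding csubspace_def
  proof (intro conjI ballI allI)
    show "0 \<in> ssum A B" using ssumI[of 0 A 0 B] A B by (simp add: csubspace_def)
  next
    fix x y assume "x \<in> ssum A B" "y \<in> ssum A B"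
    then obtain a b a' b' where "a \<in> A" "b \<in> B" "x = a + b" "a' \<in> A" "b' \<in> B" "y = a' + b'"
      by (auto elim!: ssumE)
    moreover have eq: "x + y = (a + a') + (b + b')" using calculation by (simp add: algebra_simps)
    ultimately show "x + y \<in> ssum A B" unfolding eq
      by (intro ssumI) (use A B in \<open>auto simp: csubspace_def\<close>)
  next
    fix c x assume "x \<in> ssum A B"
    then obtain a b where "a \<in> A" "b \<in> B" "x = a + b" by (auto elim!: ssumE)
    moreover have eq: "s c x = s c a + s c b" using calculation by (simp add: V.scale_right_distrib)
    ultimately show "s c x \<in> ssum A B" unfolding eq
      by (intro ssumI) (use A B in \<open>auto simp: csubspace_def\<close>)
  qed
qed

lemma ssum_left: "csubspace s B \<Longrightarrow> a \<in> A \<Longrightarrow> a \<in> ssum A B"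
  using ssumI[of a A 0 B] by (simp add: csubspace_def)
lemma ssum_right: "csubspace s A \<Longrightarrow> b \<in> B \<Longrightarrow> b \<in> ssum A B"
  using ssumI[of 0 A b B] by (simp add: csubspace_def)
lemma ssum_mono: "A \<subseteq> A' \<Longrightarrow> B \<subseteq> B' \<Longrightarrow> ssum A B \<subseteq> ssum A' B'"
  unfolding ssum_def by blast

context KMS begin

inductive_set NS :: "(nat \<Rightarrow> 'g) \<Rightarrow> 'g set" for gen where
  NS_gen: "i < l \<Longrightarrow> gen i \<in> NS gen"
| NS_zero: "0 \<in> NS gen"
| NS_add: "x \<in> NS gen \<Longrightarrow> y \<in> NS gen \<Longrightarrow> x + y \<in> NS gen"
| NS_sc: "x \<in> NS gen \<Longrightarrow> sc c x \<in> NS gen"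
| NS_br: "i < l \<Longrightarrow> x \<in> NS gen \<Longrightarrow> br (gen i) x \<in> NS gen"

lemma NS_cs: "csubspace sc (NS gen)"
  unfolding csubspace_def by (auto intro: NS.intros)

lemma NS_neg: "x \<in> NS gen \<Longrightarrow> - x \<in> NS gen" by (rule csg_neg[OF NS_cs])
lemma NS_diff: "x \<in> NS gen \<Longrightarrow> y \<in> NS gen \<Longrightarrow> x - y \<in> NS gen" by (rule csg_diff[OF NS_cs])

lemma NS_D: assumes "\<And>i. i < l \<Longrightarrow> gen i \<in> D" shows "x \<in> NS gen \<Longrightarrow> x \<in> D"
  by (induction x rule: NS.induct) (auto intro: assms cs_0[OF D_sub] cs_add[OF D_sub] cs_sc[OF D_sub] br_D)

lemma NS_hh:
  assumes w: "\<And>i h. i < l \<Longrightarrow> h \<in> hh \<Longrightarrow> br h (gen i) = sc (w i h) (gen i)"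
    and h: "h \<in> hh"
  shows "x \<in> NS gen \<Longrightarrow> br h x \<in> NS gen"
proof (induction x rule: NS.induct)
  case (NS_gen i)
  then show ?case using w[OF NS_gen h] by (simp add: NS.intros)
next
  case NS_zero
  then show ?case by (simp add: NS.intros)
next
  case (NS_add x y)
  then show ?case by (simp add: br_addR NS.intros)
next
  case (NS_sc x c)
  then show ?case by (simp add: br_scR NS.intros)
next
  case (NS_br i x)
  have "br h (br (gen i) x) = br (br h (gen i)) x + br (gen i) (br h x)" by (rule br_der)
  also have "\<dots> = sc (w i h) (br (gen i) x) + br (gen i) (br h x)"
    using w[OF NS_br(1) h] by (simp add: br_scL)
  finally show ?case using NS_br by (simp add: NS.intros)
qed

lemma NS_brc: "x \<in> NS gen \<Longrightarrow> y \<in> NS gen \<Longrightarrow> br x y \<in> NS gen"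
proof (induction x arbitrary: y rule: NS.induct)
  case (NS_gen i)
  then show ?case by (simp add: NS.intros)
next
  case NS_zero
  then show ?case by (simp add: NS.intros)
next
  case (NS_add x x')
  then show ?case by (simp add: br_addL NS.intros)
next
  case (NS_sc x c)
  then show ?case by (simp add: br_scL NS.intros)
next
  case (NS_br i x)
  have "br (br (gen i) x) y = br (gen i) (br x y) - br x (br (gen i) y)" by (rule br_jac)
  then show ?case using NS_br by (simp add: NS.intros NS_diff)
qed

abbreviation "Np \<equiv> NS e"
abbreviation "Nm \<equiv> NS f"

lemma Np_hh: "h \<in> hh \<Longrightarrow> x \<in> Np \<Longrightarrow> br h x \<in> Np"
  by (rule NS_hh[where w=al]) (auto simp: br_he)
lemma Nm_hh: "h \<in> hh \<Longrightarrow> x \<in> Nm \<Longrightarrow> br h x \<in> Nm"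
  by (rule NS_hh[where w="\<lambda>i h. - al i h"]) (auto simp: br_hf)
lemma Np_hhR: "h \<in> hh \<Longrightarrow> x \<in> Np \<Longrightarrow> br x h \<in> Np"
  using Np_hh[of h x] br_anti[of x h] NS_neg by metis
lemma Nm_hhR: "h \<in> hh \<Longrightarrow> x \<in> Nm \<Longrightarrow> br x h \<in> Nm"
  using Nm_hh[of h x] br_anti[of x h] NS_neg by metis
lemma Np_D: "x \<in> Np \<Longrightarrow> x \<in> D" by (rule NS_D[OF e_D])
lemma Nm_D: "x \<in> Nm \<Longrightarrow> x \<in> D" by (rule NS_D[OF f_D])

definition Hc :: "'g set" where "Hc = {x. \<exists>c. x = (\<Sum>i<l. sc (c i) (cr i))}"

lemma Hc_cs: "csubspace sc Hc"
  unfolding csubspace_def Hc_def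
proof (intro conjI ballI allI)
  show "0 \<in> {x. \<exists>c. x = (\<Sum>i<l. sc (c i) (cr i))}"
    by (rule CollectI, rule exI[of _ "\<lambda>i. 0"]) simp
next
  fix x y assume "x \<in> {x. \<exists>c. x = (\<Sum>i<l. sc (c i) (cr i))}" "y \<in> {x. \<exists>c. x = (\<Sum>i<l. sc (c i) (cr i))}"
  then obtain c d where "x = (\<Sum>i<l. sc (c i) (cr i))" "y = (\<Sum>i<l. sc (d i) (cr i))" by auto
  then have "x + y = (\<Sum>i<l. sc (c i + d i) (cr i))" by (simp add: sum.distrib G.scale_left_distrib)
  then show "x + y \<in> {x. \<exists>c. x = (\<Sum>i<l. sc (c i) (cr i))}" by (intro CollectI exI[of _ "\<lambda>i. c i + d i"])
next
  fix k x assume "x \<in> {x. \<exists>c. x = (\<Sum>i<l. sc (c i) (cr i))}"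
  then obtain c where "x = (\<Sum>i<l. sc (c i) (cr i))" by auto
  then have "sc k x = (\<Sum>i<l. sc (k * c i) (cr i))" by (simp add: G.scale_sum_right)
  then show "sc k x \<in> {x. \<exists>c. x = (\<Sum>i<l. sc (c i) (cr i))}" by (intro CollectI exI[of _ "\<lambda>i. k * c i"])
qed

lemma Hc_cr: "i < l \<Longrightarrow> cr i \<in> Hc"
proof -
  assume i: "i < l"
  have "(\<Sum>j<l. sc (if j = i then 1 else 0) (cr j)) = (\<Sum>j<l. if j = i then cr j else 0)"
    by (rule sum.cong) auto
  also have "\<dots> = cr i" using i by simp
  finally show ?thesis unfolding Hc_def by (intro CollectI exI[of _ "\<lambda>j. if j = i then 1 else 0"]) simp
qed

lemma Hc_h1: "x \<in> Hc \<Longrightarrow> x \<in> h1"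
proof -
  assume "x \<in> Hc"
  then obtain c where x: "x = (\<Sum>i<l. sc (c i) (cr i))" unfolding Hc_def by blast
  show "x \<in> h1" unfolding x by (rule csg_sum[OF h1_sub]) (rule cs_sc[OF h1_sub cr_h1], simp)
qed

lemma Hc_hh: "x \<in> Hc \<Longrightarrow> x \<in> hh" using Hc_h1 by auto

abbreviation "PNH \<equiv> ssum Nm Hc"
abbreviation "RR \<equiv> ssum (ssum Nm Hc) Np"
abbreviation "RH \<equiv> ssum (ssum Nm hh) Np"

lemma PNH_cs: "csubspace sc PNH" by (rule ssum_cs[OF VSg NS_cs Hc_cs])
lemma RR_cs: "csubspace sc RR" by (rule ssum_cs[OF VSg PNH_cs NS_cs])
lemma RH_cs: "csubspace sc RH" by (rule ssum_cs[OF VSg ssum_cs[OF VSg NS_cs hh_sub] NS_cs])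

lemma PNH_RR: "x \<in> PNH \<Longrightarrow> x \<in> RR" by (rule ssum_left[OF NS_cs])
lemma Nm_RR: "x \<in> Nm \<Longrightarrow> x \<in> RR" by (rule PNH_RR, rule ssum_left[OF Hc_cs])
lemma Hc_RR: "x \<in> Hc \<Longrightarrow> x \<in> RR" by (rule PNH_RR, rule ssum_right[OF NS_cs])
lemma Np_RR: "x \<in> Np \<Longrightarrow> x \<in> RR" by (rule ssum_right[OF PNH_cs])
lemma RR_RH: "RR \<subseteq> RH" by (intro ssum_mono) (auto dest: Hc_hh)

lemma e_Hc: "i < l \<Longrightarrow> c \<in> Hc \<Longrightarrow> br (e i) c \<in> Np"
  using Np_hhR[OF Hc_hh] NS.NS_gen by blast
lemma f_Hc: "i < l \<Longrightarrow> c \<in> Hc \<Longrightarrow> br (f i) c \<in> Nm"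
  using Nm_hhR[OF Hc_hh] NS.NS_gen by blast

lemma N4: "y \<in> Nm \<Longrightarrow> i < l \<Longrightarrow> br (e i) y \<in> PNH"
proof (induction y rule: NS.induct)
  case (NS_gen j)
  then show ?case using br_ef[of i j] Hc_cr[of i] cs_0[OF PNH_cs] ssum_right[OF NS_cs, of "cr i" Hc] by auto
next
  case NS_zero
  then show ?case using cs_0[OF PNH_cs] by simp
next
  case (NS_add x y)
  then show ?case using cs_add[OF PNH_cs] by (simp add: br_addR)
next
  case (NS_sc x c)
  then show ?case using cs_sc[OF PNH_cs] by (simp add: br_scR)
next
  case (NS_br j y)
  have eq: "br (e i) (br (f j) y) = br (br (e i) (f j)) y + br (f j) (br (e i) y)" by (rule br_der)
  have 1: "br (br (e i) (f j)) y \<in> Nm"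
    using br_ef[of i j] NS_br Nm_hh[OF cr_hh] by (auto intro: NS.intros)
  from NS_br obtain a c where ac: "a \<in> Nm" "c \<in> Hc" "br (e i) y = a + c" by (auto elim: ssumE)
  have 2: "br (f j) (br (e i) y) \<in> Nm"
    using ac NS_br(1) by (simp add: br_addR NS.intros f_Hc)
  have "br (e i) (br (f j) y) \<in> Nm" using 1 2 eq by (simp add: NS.intros)
  then show ?case by (rule ssum_left[OF Hc_cs])
qed

lemma e_RR: assumes "i < l" "z \<in> RR" shows "br (e i) z \<in> RR"
proof -
  from assms(2) obtain a c b where "a \<in> Nm" "c \<in> Hc" "b \<in> Np" "z = a + c + b"
    by (auto elim!: ssumE)
  then have "br (e i) z = br (e i) a + br (e i) c + br (e i) b" by (simp add: br_addR)
  moreover have "br (e i) a \<in> RR" using N4 PNH_RR \<open>a \<in> Nm\<close> assms(1) by blast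
  moreover have "br (e i) c \<in> RR" using e_Hc Np_RR \<open>c \<in> Hc\<close> assms(1) by blast
  moreover have "br (e i) b \<in> RR" using Np_RR NS.NS_br \<open>b \<in> Np\<close> assms(1) by blast
  ultimately show ?thesis using cs_add[OF RR_cs] by simp
qed

lemma N5: "x \<in> Np \<Longrightarrow> y \<in> Nm \<Longrightarrow> br x y \<in> RR"
proof (induction x arbitrary: y rule: NS.induct)
  case (NS_gen i)
  then show ?case by (simp add: N4 PNH_RR)
next
  case NS_zero
  then show ?case using cs_0[OF RR_cs] by simp
next
  case (NS_add x x')
  then show ?case using cs_add[OF RR_cs] by (simp add: br_addL)
next
  case (NS_sc x c)
  then show ?case using cs_sc[OF RR_cs] by (simp add: br_scL)
next
  case (NS_br i x)
  have eq: "br (br (e i) x) y = br (e i) (br x y) - br x (br (e i) y)" by (rule br_jac)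
  have 1: "br (e i) (br x y) \<in> RR" using NS_br by (simp add: e_RR)
  from N4[OF NS_br(4) NS_br(1)] obtain a c where ac: "a \<in> Nm" "c \<in> Hc" "br (e i) y = a + c"
    by (auto elim: ssumE)
  have "br x c \<in> Np" using Np_hhR[OF Hc_hh[OF ac(2)] NS_br(2)] .
  then have 2: "br x (br (e i) y) \<in> RR" using ac NS_br.IH[OF ac(1)]
    by (simp add: br_addR cs_add[OF RR_cs] Np_RR)
  show ?case using 1 2 eq by (simp add: csg_diff[OF RR_cs])
qed

lemma N5': "x \<in> Nm \<Longrightarrow> y \<in> Np \<Longrightarrow> br x y \<in> RR"
  using N5[of y x] br_anti[of x y] csg_neg[OF RR_cs] by metis

lemma RH_br:
  assumes "x \<in> RH" "z \<in> RH" shows "br x z \<in> RR"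
proof -
  have L: "br a z \<in> RR" if "a \<in> Nm" for a
  proof -
    from assms(2) obtain a' h b where "a' \<in> Nm" "h \<in> hh" "b \<in> Np" "z = a' + h + b"
      by (auto elim!: ssumE)
    then have "br a z = br a a' + br a h + br a b" by (simp add: br_addR)
    moreover have "br a a' \<in> RR" using Nm_RR NS_brc \<open>a' \<in> Nm\<close> that by blast
    moreover have "br a h \<in> RR" using Nm_RR Nm_hhR \<open>h \<in> hh\<close> that by blast
    moreover have "br a b \<in> RR" using N5' \<open>b \<in> Np\<close> that by blast
    ultimately show ?thesis using cs_add[OF RR_cs] by simp
  qed
  have M: "br h z \<in> RR" if "h \<in> hh" for h
  proof -
    from assms(2) obtain a' h' b where "a' \<in> Nm" "h' \<in> hh" "b \<in> Np" "z = a' + h' + b"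
      by (auto elim!: ssumE)
    then have "br h z = br h a' + br h h' + br h b" by (simp add: br_addR)
    moreover have "br h a' \<in> RR" using Nm_RR Nm_hh \<open>a' \<in> Nm\<close> that by blast
    moreover have "br h h' \<in> RR" using hh_ab \<open>h' \<in> hh\<close> that cs_0[OF RR_cs] by simp
    moreover have "br h b \<in> RR" using Np_RR Np_hh \<open>b \<in> Np\<close> that by blast
    ultimately show ?thesis using cs_add[OF RR_cs] by simp
  qed
  have P: "br b z \<in> RR" if "b \<in> Np" for b
  proof -
    from assms(2) obtain a' h b' where "a' \<in> Nm" "h \<in> hh" "b' \<in> Np" "z = a' + h + b'"
      by (auto elim!: ssumE)
    then have "br b z = br b a' + br b h + br b b'" by (simp add: br_addR)
    moreover have "br b a' \<in> RR" using N5 \<open>a' \<in> Nm\<close> that by blast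
    moreover have "br b h \<in> RR" using Np_RR Np_hhR \<open>h \<in> hh\<close> that by blast
    moreover have "br b b' \<in> RR" using Np_RR NS_brc \<open>b' \<in> Np\<close> that by blast
    ultimately show ?thesis using cs_add[OF RR_cs] by simp
  qed
  from assms(1) obtain a h b where "a \<in> Nm" "h \<in> hh" "b \<in> Np" "x = a + h + b"
    by (auto elim!: ssumE)
  then have "br x z = br a z + br h z + br b z" by (simp add: br_addL)
  then show ?thesis using L M P cs_add[OF RR_cs] \<open>a \<in> Nm\<close> \<open>h \<in> hh\<close> \<open>b \<in> Np\<close> by simp
qed

lemma RH_UNIV: "RH = UNIV"
proof (rule gen)
  show "lie_subalgebra sc br RH"
    unfolding lie_subalgebra_def using RH_cs RH_br RR_RH by blast
  show "hh \<subseteq> RH"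
    using ssum_left[OF NS_cs ssum_right[OF NS_cs]] by blast
  show "e ` {..<l} \<subseteq> RH"
    using ssum_right[OF ssum_cs[OF VSg NS_cs hh_sub]] NS.NS_gen by blast
  show "f ` {..<l} \<subseteq> RH"
    using ssum_left[OF NS_cs ssum_left[OF hh_sub]] NS.NS_gen by blast
qed

lemma D_RR: "D \<subseteq> RR"
proof -
  have "\<forall>x y. br x y \<in> RR" using RH_br RH_UNIV by blast
  then have "RR \<in> {S. csubspace sc S \<and> (\<forall>x y. br x y \<in> S)}" using RR_cs by blast
  then show ?thesis unfolding derived_def by blast
qed

end



lemma indep_weights_list:
  assumes VS: "vector_space s"
    and add: "\<And>h x y. h \<in> H \<Longrightarrow> T h (x + y) = T h x + T h y"
    and hom: "\<And>h c x. h \<in> H \<Longrightarrow> T h (s c x) = s c (T h x)"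
    and w0: "\<And>h. h \<in> H \<Longrightarrow> T h w0 = s (mb h) w0"
    and gw: "\<And>p h. p \<in> set L \<Longrightarrow> h \<in> H \<Longrightarrow> T h (snd p) = s (fst p h) (snd p)"
    and gd: "\<And>p. p \<in> set L \<Longrightarrow> \<exists>h\<in>H. fst p h \<noteq> mb h"
    and sum0: "w0 + sum_list (map snd L) = 0"
  shows "w0 = 0"
proof (rule indep_weights[OF VS add hom _ w0, where S="{..<length L}" and g="\<lambda>j. snd (L ! j)" and \<mu>="\<lambda>j. fst (L ! j)"])
  show "finite {..<length L}" by simp
  show "T h (snd (L ! j)) = s (fst (L ! j) h) (snd (L ! j))" if "j \<in> {..<length L}" "h \<in> H" for j h
    using gw[of "L ! j" h] that by simp
  show "\<exists>h\<in>H. fst (L ! j) h \<noteq> mb h" if "j \<in> {..<length L}" for j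
    using gd[of "L ! j"] that by simp
  have "sum_list (map snd L) = (\<Sum>j<length L. snd (L ! j))"
    by (simp add: sum_list_sum_nth lessThan_atLeast0)
  then show "w0 + (\<Sum>j\<in>{..<length L}. snd (L ! j)) = 0" using sum0 by simp
qed (auto)

context KMS begin

definition wtn :: "(nat \<Rightarrow> nat) \<Rightarrow> 'g \<Rightarrow> complex" where
  "wtn k y = (\<Sum>i<l. of_nat (k i) * al i y)"

definition nz :: "(nat \<Rightarrow> nat) \<Rightarrow> bool" where
  "nz k \<longleftrightarrow> (\<exists>i<l. k i \<noteq> 0)"

definition dl :: "nat \<Rightarrow> nat \<Rightarrow> nat" where "dl i = (\<lambda>j. if j = i then 1 else 0)"

lemma wtn_dl: "i < l \<Longrightarrow> wtn (dl i) y = al i y"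
proof -
  assume i: "i < l"
  have "wtn (dl i) y = (\<Sum>j<l. if j = i then al j y else 0)"
    unfolding wtn_def dl_def by (rule sum.cong) auto
  also have "\<dots> = al i y" using i by simp
  finally show ?thesis .
qed

lemma wtn_inc: "i < l \<Longrightarrow> wtn (\<lambda>j. k j + dl i j) y = wtn k y + al i y"
proof -
  assume i: "i < l"
  have "wtn (\<lambda>j. k j + dl i j) y = wtn k y + wtn (dl i) y"
    unfolding wtn_def by (simp add: sum.distrib distrib_right)
  then show ?thesis using wtn_dl[OF i] by simp
qed

lemma nz_dl: "i < l \<Longrightarrow> nz (dl i)" by (auto simp: nz_def dl_def)
lemma nz_inc: "i < l \<Longrightarrow> nz (\<lambda>j. k j + dl i j)" by (auto simp: nz_def dl_def)

lemma wtn_nonzero: assumes "nz k" shows "\<exists>y\<in>hh. wtn k y \<noteq> 0"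
proof (rule ccontr)
  assume "\<not> ?thesis"
  then have "\<forall>y\<in>hh. (\<Sum>i<l. of_nat (k i) * al i y) = 0" by (simp add: wtn_def)
  then have "\<forall>i<l. (of_nat (k i) :: complex) = 0" using al_indep[of "\<lambda>i. of_nat (k i)"] by blast
  then show False using assms by (auto simp: nz_def)
qed

definition WSp :: "'g set" where
  "WSp = {x. \<exists>xs. x = sum_list (map snd xs) \<and>
     (\<forall>p\<in>set xs. nz (fst p) \<and> snd p \<in> root_space sc br hh (wtn (fst p)))}"
definition WSm :: "'g set" where
  "WSm = {x. \<exists>xs. x = sum_list (map snd xs) \<and>
     (\<forall>p\<in>set xs. nz (fst p) \<and> snd p \<in> root_space sc br hh (\<lambda>y. - wtn (fst p) y))}"

lemma rs_sc: "v \<in> root_space sc br hh \<mu> \<Longrightarrow> sc c v \<in> root_space sc br hh \<mu>"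
  by (simp add: root_space_def br_scR mult.commute)
lemma rs_neg: "v \<in> root_space sc br hh \<mu> \<Longrightarrow> - v \<in> root_space sc br hh \<mu>"
  by (simp add: root_space_def br_negR)

lemma rs_gen: assumes "v \<in> root_space sc br hh \<mu>" "i < l"
    "\<And>h. h \<in> hh \<Longrightarrow> br h g = sc (w h) g"
  shows "br g v \<in> root_space sc br hh (\<lambda>y. \<mu> y + w y)"
  unfolding root_space_def
proof (intro CollectI ballI)
  fix h assume h: "h \<in> hh"
  have "br h (br g v) = br (br h g) v + br g (br h v)" by (rule br_der)
  also have "\<dots> = sc (w h) (br g v) + sc (\<mu> h) (br g v)"
    using assms(1) h assms(3)[OF h] by (simp add: root_space_def br_scL br_scR)
  finally show "br h (br g v) = sc (\<mu> h + w h) (br g v)" by (simp add: G.scale_left_distrib add.commute)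
qed

lemma br_sum_list: "br g (sum_list xs) = sum_list (map (br g) xs)"
  by (induction xs) (simp_all add: br_addR)

lemma Np_WSp: "x \<in> Np \<Longrightarrow> x \<in> WSp"
proof (induction x rule: NS.induct)
  case (NS_gen i)
  have "e i \<in> root_space sc br hh (wtn (dl i))"
    using br_he NS_gen by (simp add: root_space_def wtn_dl)
  then show ?case unfolding WSp_def using NS_gen nz_dl
    by (intro CollectI exI[of _ "[(dl i, e i)]"]) auto
next
  case NS_zero
  then show ?case unfolding WSp_def by (intro CollectI exI[of _ "[]"]) auto
next
  case (NS_add x y)
  then obtain xs ys where "x = sum_list (map snd xs)" "y = sum_list (map snd ys)"
      "\<forall>p\<in>set xs. nz (fst p) \<and> snd p \<in> root_space sc br hh (wtn (fst p))"
      "\<forall>p\<in>set ys. nz (fst p) \<and> snd p \<in> root_space sc br hh (wtn (fst p))"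
    unfolding WSp_def by blast
  then show ?case unfolding WSp_def by (intro CollectI exI[of _ "xs @ ys"]) auto
next
  case (NS_sc x c)
  then obtain xs where "x = sum_list (map snd xs)"
      "\<forall>p\<in>set xs. nz (fst p) \<and> snd p \<in> root_space sc br hh (wtn (fst p))"
    unfolding WSp_def by blast
  moreover have "sc c (sum_list (map snd xs)) = sum_list (map snd (map (\<lambda>p. (fst p, sc c (snd p))) xs))"
    by (induction xs) (simp_all add: G.scale_right_distrib)
  ultimately show ?case unfolding WSp_def
    by (intro CollectI exI[of _ "map (\<lambda>p. (fst p, sc c (snd p))) xs"]) (auto simp: rs_sc)
next
  case (NS_br i x)
  then obtain xs where xs: "x = sum_list (map snd xs)"
      "\<forall>p\<in>set xs. nz (fst p) \<and> snd p \<in> root_space sc br hh (wtn (fst p))"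
    unfolding WSp_def by blast
  let ?ys = "map (\<lambda>p. (\<lambda>j. fst p j + dl i j, br (e i) (snd p))) xs"
  have "br (e i) x = sum_list (map snd ?ys)" unfolding xs br_sum_list by (simp add: comp_def)
  moreover have "nz (fst q) \<and> snd q \<in> root_space sc br hh (wtn (fst q))" if "q \<in> set ?ys" for q
  proof -
    from that obtain p where p: "p \<in> set xs" "q = (\<lambda>j. fst p j + dl i j, br (e i) (snd p))" by auto
    have "br (e i) (snd p) \<in> root_space sc br hh (\<lambda>y. wtn (fst p) y + al i y)"
      by (rule rs_gen) (use p xs NS_br br_he in auto)
    moreover have "(\<lambda>y. wtn (fst p) y + al i y) = wtn (\<lambda>j. fst p j + dl i j)"
      using wtn_inc[OF NS_br(1)] by auto
    ultimately show ?thesis using p nz_inc[OF NS_br(1)] by simp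
  qed
  ultimately show ?case unfolding WSp_def by blast
qed

lemma Nm_WSm: "x \<in> Nm \<Longrightarrow> x \<in> WSm"
proof (induction x rule: NS.induct)
  case (NS_gen i)
  have "f i \<in> root_space sc br hh (\<lambda>y. - wtn (dl i) y)"
    using br_hf NS_gen by (simp add: root_space_def wtn_dl)
  then show ?case unfolding WSm_def using NS_gen nz_dl
    by (intro CollectI exI[of _ "[(dl i, f i)]"]) auto
next
  case NS_zero
  then show ?case unfolding WSm_def by (intro CollectI exI[of _ "[]"]) auto
next
  case (NS_add x y)
  then obtain xs ys where "x = sum_list (map snd xs)" "y = sum_list (map snd ys)"
      "\<forall>p\<in>set xs. nz (fst p) \<and> snd p \<in> root_space sc br hh (\<lambda>y. - wtn (fst p) y)"
      "\<forall>p\<in>set ys. nz (fst p) \<and> snd p \<in> root_space sc br hh (\<lambda>y. - wtn (fst p) y)"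
    unfolding WSm_def by blast
  then show ?case unfolding WSm_def by (intro CollectI exI[of _ "xs @ ys"]) auto
next
  case (NS_sc x c)
  then obtain xs where "x = sum_list (map snd xs)"
      "\<forall>p\<in>set xs. nz (fst p) \<and> snd p \<in> root_space sc br hh (\<lambda>y. - wtn (fst p) y)"
    unfolding WSm_def by blast
  moreover have "sc c (sum_list (map snd xs)) = sum_list (map snd (map (\<lambda>p. (fst p, sc c (snd p))) xs))"
    by (induction xs) (simp_all add: G.scale_right_distrib)
  ultimately show ?case unfolding WSm_def
    by (intro CollectI exI[of _ "map (\<lambda>p. (fst p, sc c (snd p))) xs"]) (auto simp: rs_sc)
next
  case (NS_br i x)
  then obtain xs where xs: "x = sum_list (map snd xs)"
      "\<forall>p\<in>set xs. nz (fst p) \<and> snd p \<in> root_space sc br hh (\<lambda>y. - wtn (fst p) y)"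
    unfolding WSm_def by blast
  let ?ys = "map (\<lambda>p. (\<lambda>j. fst p j + dl i j, br (f i) (snd p))) xs"
  have "br (f i) x = sum_list (map snd ?ys)" unfolding xs br_sum_list by (simp add: comp_def)
  moreover have "nz (fst q) \<and> snd q \<in> root_space sc br hh (\<lambda>y. - wtn (fst q) y)" if "q \<in> set ?ys" for q
  proof -
    from that obtain p where p: "p \<in> set xs" "q = (\<lambda>j. fst p j + dl i j, br (f i) (snd p))" by auto
    have "br (f i) (snd p) \<in> root_space sc br hh (\<lambda>y. - wtn (fst p) y + - al i y)"
      by (rule rs_gen) (use p xs NS_br br_hf in auto)
    moreover have "(\<lambda>y. - wtn (fst p) y + - al i y) = (\<lambda>y. - wtn (\<lambda>j. fst p j + dl i j) y)"
      using wtn_inc[OF NS_br(1)] by auto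
    ultimately show ?thesis using p nz_inc[OF NS_br(1)] by simp
  qed
  ultimately show ?case unfolding WSm_def by blast
qed

lemma h1_Hc: assumes x: "x \<in> h1" shows "x \<in> Hc"
proof -
  from x D_RR have "x \<in> RR" by auto
  then obtain a c b where abc: "a \<in> Nm" "c \<in> Hc" "b \<in> Np" "x = a + c + b" by (auto elim!: ssumE)
  from Nm_WSm[OF abc(1)] obtain as where as: "a = sum_list (map snd as)"
      "\<forall>p\<in>set as. nz (fst p) \<and> snd p \<in> root_space sc br hh (\<lambda>y. - wtn (fst p) y)"
    unfolding WSm_def by blast
  from Np_WSp[OF abc(3)] obtain bs where bs: "b = sum_list (map snd bs)"
      "\<forall>p\<in>set bs. nz (fst p) \<and> snd p \<in> root_space sc br hh (wtn (fst p))"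
    unfolding WSp_def by blast
  let ?L = "map (\<lambda>p. (\<lambda>y. - wtn (fst p) y, - snd p)) as @ map (\<lambda>p. (wtn (fst p), - snd p)) bs"
  have neg: "sum_list (map (\<lambda>p. - snd p) xs) = - sum_list (map snd xs)" for xs :: "((nat \<Rightarrow> nat) \<times> 'g) list"
    by (induction xs) simp_all
  have "x - c = 0"
  proof (rule indep_weights_list[OF VSg, where H=hh and T=br and mb="\<lambda>y. 0" and L="?L"])
    show "br h (y + z) = br h y + br h z" for h y z by (rule br_addR)
    show "br h (sc c' z) = sc c' (br h z)" for h c' z by (rule br_scR)
    show "br h (x - c) = sc 0 (x - c)" if "h \<in> hh" for h
      using that x Hc_hh[OF abc(2)] by (simp add: br_diffR hh_ab)
    show "br h (snd p) = sc (fst p h) (snd p)" if "p \<in> set ?L" "h \<in> hh" for p h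
      using that as bs by (auto simp: root_space_def br_negR)
    show "\<exists>h\<in>hh. fst p h \<noteq> 0" if "p \<in> set ?L" for p
      using that as bs wtn_nonzero by fastforce
    show "x - c + sum_list (map snd ?L) = 0"
      using abc(4) as(1) bs(1) by (simp add: comp_def neg algebra_simps)
  qed
  then show ?thesis using abc(2) by simp
qed

end



lemma VSC: "vector_space ((*) :: complex \<Rightarrow> complex \<Rightarrow> complex)"
  by unfold_locales (simp_all add: algebra_simps)

context KMS begin

definition lact :: "'g \<Rightarrow> ((nat \<Rightarrow> int) \<Rightarrow> complex) \<Rightarrow> 'v \<Rightarrow> 'v" where
  "lact X a u = lsum sv a (\<lambda>m. act X m u)"

definition lpsi :: "'g \<Rightarrow> ((nat \<Rightarrow> int) \<Rightarrow> complex) \<Rightarrow> complex" where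
  "lpsi x a = lsum (*) a (psi1 x)"

lemma lpsi_eq: "lpsi x a = (\<Sum>m\<in>{m. a m \<noteq> 0}. a m * psi1 x m)"
  by (simp add: lpsi_def lsum_def)

section \<open>Laurent polynomials\<close>

lemma lau_fin: "a \<in> laurent n \<Longrightarrow> finite {m. a m \<noteq> 0}" by (simp add: laurent_def)
lemma lau_expo: "a \<in> laurent n \<Longrightarrow> a m \<noteq> 0 \<Longrightarrow> m \<in> EE" by (auto simp: laurent_def)

lemma delta_lau: "m \<in> EE \<Longrightarrow> delta m \<in> laurent n"
proof -
  assume m: "m \<in> EE"
  have "{j. delta m j \<noteq> 0} = {m}" by (auto simp: delta_def)
  then show ?thesis using m by (simp add: laurent_def)
qed

lemma zero_lau: "(\<lambda>m. 0) \<in> laurent n" by (simp add: laurent_def)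

lemma add_lau: "a \<in> laurent n \<Longrightarrow> b \<in> laurent n \<Longrightarrow> (\<lambda>m. a m + b m) \<in> laurent n"
proof -
  assume a: "a \<in> laurent n" and b: "b \<in> laurent n"
  have sub: "{m. a m + b m \<noteq> 0} \<subseteq> {m. a m \<noteq> 0} \<union> {m. b m \<noteq> 0}" by auto
  then have "finite {m. a m + b m \<noteq> 0}" using a b by (auto simp: laurent_def intro: finite_subset)
  moreover have "{m. a m + b m \<noteq> 0} \<subseteq> EE" using sub a b by (auto simp: laurent_def)
  ultimately show ?thesis by (simp add: laurent_def)
qed

lemma sc_lau: "a \<in> laurent n \<Longrightarrow> (\<lambda>m. c * a m) \<in> laurent n"
  unfolding laurent_def by (auto intro: finite_subset[of _ "{m. a m \<noteq> 0}"])

lemma sum_lau: "finite K \<Longrightarrow> (\<And>k. k \<in> K \<Longrightarrow> g k \<in> laurent n) \<Longrightarrow> (\<lambda>m. \<Sum>k\<in>K. g k m) \<in> laurent n"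
  by (induction K rule: finite_induct) (auto simp: zero_lau add_lau)

lemma lincomb_lau: "a \<in> laurent n \<Longrightarrow> finite B \<Longrightarrow> B \<subseteq> laurent n \<Longrightarrow>
   (\<lambda>m. a m - (\<Sum>b\<in>B. c b * b m)) \<in> laurent n"
proof -
  assume a: "a \<in> laurent n" and B: "finite B" "B \<subseteq> laurent n"
  have "(\<lambda>m. \<Sum>b\<in>B. c b * b m) \<in> laurent n"
    using B by (intro sum_lau) (auto intro: sc_lau)
  then have "(\<lambda>m. (-1) * (\<Sum>b\<in>B. c b * b m)) \<in> laurent n" by (rule sc_lau)
  from add_lau[OF a this] show ?thesis by simp
qed

lemma shift_lau: "a \<in> laurent n \<Longrightarrow> m \<in> EE \<Longrightarrow> shift m a \<in> laurent n"
proof -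
  assume a: "a \<in> laurent n" and m: "m \<in> EE"
  have "finite {j. shift m a j \<noteq> 0}" unfolding supp_shift using lau_fin[OF a] by simp
  moreover have "{j. shift m a j \<noteq> 0} \<subseteq> EE" unfolding supp_shift
    using lau_expo[OF a] m expo_add by auto
  ultimately show ?thesis by (simp add: laurent_def)
qed

lemma shift_lmult: "shift m a = lmult (delta m) a"
proof
  fix j
  have s: "{k. delta m k \<noteq> 0} = {m}" by (auto simp: delta_def)
  have "lmult (delta m) a j = (\<Sum>k\<in>{m}. delta m k * a (\<lambda>i. j i - k i))"
    unfolding lmult_def s ..
  also have "\<dots> = a (\<lambda>i. j i - m i)" by (simp add: delta_def)
  finally show "shift m a j = lmult (delta m) a j" by (simp add: shift_def)
qed

lemma shift_0: "shift (\<lambda>i. 0) a = a" by (simp add: shift_def)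

lemma lmult_lau: assumes c: "c \<in> laurent n" and a: "a \<in> laurent n" shows "lmult c a \<in> laurent n"
proof -
  let ?S = "(\<lambda>(k, j). (\<lambda>i. k i + j i)) ` ({k. c k \<noteq> 0} \<times> {j. a j \<noteq> 0})"
  have sub: "{m. lmult c a m \<noteq> 0} \<subseteq> ?S"
  proof
    fix m assume "m \<in> {m. lmult c a m \<noteq> 0}"
    then have "(\<Sum>k\<in>{k. c k \<noteq> 0}. c k * a (\<lambda>i. m i - k i)) \<noteq> 0" by (simp add: lmult_def)
    then obtain k where "k \<in> {k. c k \<noteq> 0}" "c k * a (\<lambda>i. m i - k i) \<noteq> 0"
      by (rule sum.not_neutral_contains_not_neutral)
    then have k: "c k \<noteq> 0" "a (\<lambda>i. m i - k i) \<noteq> 0" by auto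
    have "m = (\<lambda>i. k i + (\<lambda>i. m i - k i) i)" by auto
    then show "m \<in> ?S" using k by (intro image_eqI[where x="(k, \<lambda>i. m i - k i)"]) auto
  qed
  have "finite ?S" using lau_fin[OF c] lau_fin[OF a] by auto
  moreover have "?S \<subseteq> EE" using lau_expo[OF c] lau_expo[OF a] expo_add by auto
  ultimately show ?thesis using sub unfolding laurent_def by (auto intro: finite_subset)
qed

lemma shift_lmult_expand:
  "shift m (lmult c a) = (\<lambda>j. \<Sum>k\<in>{k. c k \<noteq> 0}. c k * shift (\<lambda>i. m i + k i) a j)"
proof
  fix j
  have "(\<lambda>i. (j i - m i) - k i) = (\<lambda>i. j i - (m i + k i))" for k :: "nat \<Rightarrow> int" by auto
  then show "shift m (lmult c a) j = (\<Sum>k\<in>{k. c k \<noteq> 0}. c k * shift (\<lambda>i. m i + k i) a j)"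
    by (simp add: shift_def lmult_def)
qed

lemma lact_cong: "a \<in> laurent n \<Longrightarrow> (\<And>m. m \<in> EE \<Longrightarrow> act X m u = act Y m w) \<Longrightarrow> lact X a u = lact Y a w"
  unfolding lact_def by (rule lsum_G_cong) (auto dest: lau_expo)

lemma lact_addv: "X \<in> D \<Longrightarrow> a \<in> laurent n \<Longrightarrow> lact X a (u + w) = lact X a u + lact X a w"
proof -
  assume X: "X \<in> D" and a: "a \<in> laurent n"
  have "lact X a (u + w) = lsum sv a (\<lambda>m. act X m u + act X m w)"
    unfolding lact_def by (rule lsum_G_cong) (use X a lau_expo act_addv in auto)
  then show ?thesis by (simp add: lsum_G_add[OF VSv] lact_def)
qed

lemma lact_scv: "X \<in> D \<Longrightarrow> a \<in> laurent n \<Longrightarrow> lact X a (sv c u) = sv c (lact X a u)"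
proof -
  assume X: "X \<in> D" and a: "a \<in> laurent n"
  have "lact X a (sv c u) = lsum sv a (\<lambda>m. sv c (act X m u))"
    unfolding lact_def by (rule lsum_G_cong) (use X a lau_expo act_scv in auto)
  then show ?thesis by (simp add: lsum_G_scale[OF VSv] lact_def)
qed

lemma lact_0v: "X \<in> D \<Longrightarrow> a \<in> laurent n \<Longrightarrow> lact X a 0 = 0"
  using lact_addv[of X a 0 0] by simp

lemma lact_addX: "X \<in> D \<Longrightarrow> Y \<in> D \<Longrightarrow> a \<in> laurent n \<Longrightarrow> lact (X + Y) a u = lact X a u + lact Y a u"
proof -
  assume X: "X \<in> D" and Y: "Y \<in> D" and a: "a \<in> laurent n"
  have "lact (X + Y) a u = lsum sv a (\<lambda>m. act X m u + act Y m u)"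
    unfolding lact_def by (rule lsum_G_cong) (use X Y a lau_expo act_addX in auto)
  then show ?thesis by (simp add: lsum_G_add[OF VSv] lact_def)
qed

lemma lact_scX: "X \<in> D \<Longrightarrow> a \<in> laurent n \<Longrightarrow> lact (sc c X) a u = sv c (lact X a u)"
proof -
  assume X: "X \<in> D" and a: "a \<in> laurent n"
  have "lact (sc c X) a u = lsum sv a (\<lambda>m. sv c (act X m u))"
    unfolding lact_def by (rule lsum_G_cong) (use X a lau_expo act_scX in auto)
  then show ?thesis by (simp add: lsum_G_scale[OF VSv] lact_def)
qed

lemma lact_0X: "a \<in> laurent n \<Longrightarrow> lact 0 a u = 0"
  using lact_scX[of 0 a 0 u] cs_0[OF D_sub] by simp

lemma lact_sum_listX: "(\<And>p. p \<in> set ys \<Longrightarrow> g p \<in> D) \<Longrightarrow> a \<in> laurent n \<Longrightarrow>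
   lact (sum_list (map g ys)) a u = sum_list (map (\<lambda>p. lact (g p) a u) ys)"
proof (induction ys)
  case Nil
  then show ?case by (simp add: lact_0X)
next
  case (Cons p ys)
  have "sum_list (map g ys) \<in> D"
    using Cons.prems(1) by (induction ys) (auto intro: cs_0[OF D_sub] cs_add[OF D_sub])
  then show ?case using Cons by (simp add: lact_addX)
qed

lemma lact_delta: "m \<in> EE \<Longrightarrow> lact X (delta m) u = act X m u"
  by (simp add: lact_def lsum_delta[OF VSv])

lemma lact_lau_add: "a \<in> laurent n \<Longrightarrow> b \<in> laurent n \<Longrightarrow> lact X (\<lambda>m. a m + b m) u = lact X a u + lact X b u"
  unfolding lact_def by (rule lsum_add[OF VSv]) (simp_all add: lau_fin)

lemma lact_lau_sc: "lact X (\<lambda>m. c * a m) u = sv c (lact X a u)"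
  unfolding lact_def by (rule lsum_scale[OF VSv])

lemma act_lsum: "X \<in> D \<Longrightarrow> m \<in> EE \<Longrightarrow> act X m (lsum sv a G) = lsum sv a (\<lambda>k. act X m (G k))"
  by (rule lsum_op[OF VSv]) (simp_all add: act_addv act_scv)

lemma actd_lsum: "x \<in> h2 \<Longrightarrow> actd x (lsum sv a G) = lsum sv a (\<lambda>k. actd x (G k))"
  by (rule lsum_op[OF VSv]) (simp_all add: actd_addv actd_scv)

lemma lact_comm:
  assumes X: "X \<in> D" and Y: "Y \<in> D" and m: "m \<in> EE" and a: "a \<in> laurent n"
  shows "act X m (lact Y a u) = lact Y a (act X m u) + lact (br X Y) (shift m a) u"
proof -
  have "act X m (lact Y a u) = lsum sv a (\<lambda>k. act X m (act Y k u))"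
    unfolding lact_def by (rule act_lsum[OF X m])
  also have "\<dots> = lsum sv a (\<lambda>k. act Y k (act X m u) + act (br X Y) (\<lambda>i. m i + k i) u)"
  proof (rule lsum_G_cong)
    fix k assume "a k \<noteq> 0"
    then have k: "k \<in> EE" using lau_expo[OF a] by blast
    show "act X m (act Y k u) = act Y k (act X m u) + act (br X Y) (\<lambda>i. m i + k i) u"
      by (rule act_comm[OF X Y m k])
  qed
  also have "\<dots> = lact Y a (act X m u) + lsum sv a (\<lambda>k. act (br X Y) (\<lambda>i. m i + k i) u)"
    by (simp add: lsum_G_add[OF VSv] lact_def)
  also have "lsum sv a (\<lambda>k. act (br X Y) (\<lambda>i. m i + k i) u) = lact (br X Y) (shift m a) u"
    by (simp add: lact_def lsum_shift)
  finally show ?thesis .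
qed

lemma lactd_comm:
  assumes x: "x \<in> h2" and Y: "Y \<in> D" and a: "a \<in> laurent n"
  shows "actd x (lact Y a u) = lact Y a (actd x u) + lact (br x Y) a u"
proof -
  have "actd x (lact Y a u) = lsum sv a (\<lambda>k. actd x (act Y k u))"
    unfolding lact_def by (rule actd_lsum[OF x])
  also have "\<dots> = lsum sv a (\<lambda>k. act Y k (actd x u) + act (br x Y) k u)"
  proof (rule lsum_G_cong)
    fix k assume "a k \<noteq> 0"
    then have k: "k \<in> EE" using lau_expo[OF a] by blast
    show "actd x (act Y k u) = act Y k (actd x u) + act (br x Y) k u"
      by (rule actd_comm[OF x Y k])
  qed
  also have "\<dots> = lact Y a (actd x u) + lact (br x Y) a u"
    by (simp add: lsum_G_add[OF VSv] lact_def)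
  finally show ?thesis .
qed

lemma lact_h1_v0: "x \<in> h1 \<Longrightarrow> a \<in> laurent n \<Longrightarrow> lact x a v0 = sv (lpsi x a) v0"
proof -
  assume x: "x \<in> h1" and a: "a \<in> laurent n"
  have "lact x a v0 = lsum sv a (\<lambda>m. sv (psi1 x m) v0)"
    unfolding lact_def by (rule lsum_G_cong) (use x a lau_expo hw_h1 in auto)
  also have "\<dots> = sv (lpsi x a) v0"
    by (simp add: lsum_def lpsi_def V.scale_sum_left)
  finally show ?thesis .
qed

lemma psi1_add: "x \<in> h1 \<Longrightarrow> y \<in> h1 \<Longrightarrow> m \<in> EE \<Longrightarrow> psi1 (x + y) m = psi1 x m + psi1 y m"
  using psi_lin(1) by (simp add: clinear_on_def)
lemma psi1_sc: "x \<in> h1 \<Longrightarrow> m \<in> EE \<Longrightarrow> psi1 (sc c x) m = c * psi1 x m"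
  using psi_lin(1) by (simp add: clinear_on_def)
lemma psi1_0: "m \<in> EE \<Longrightarrow> psi1 0 m = 0"
  using psi1_sc[of 0 m 0] cs_0[OF h1_sub] by simp
lemma psi2_0: "psi2 0 = 0"
  using psi_lin(2) cs_0[OF h2_sub(1)] unfolding clinear_on_def by (metis G.scale_zero_left mult_zero_left)

lemma psi1_sum: "finite I \<Longrightarrow> (\<And>i. i \<in> I \<Longrightarrow> g i \<in> h1) \<Longrightarrow> m \<in> EE \<Longrightarrow>
  psi1 (sum g I) m = (\<Sum>i\<in>I. psi1 (g i) m)"
proof (induction I rule: finite_induct)
  case empty
  then show ?case by (simp add: psi1_0)
next
  case (insert i I)
  have "sum g I \<in> h1" using insert by (intro csg_sum[OF h1_sub]) auto
  then show ?case using insert by (simp add: psi1_add)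
qed

lemma lpsi_Hc:
  assumes x: "x \<in> Hc" and a: "a \<in> laurent n" and z: "\<And>i. i < l \<Longrightarrow> lpsi (cr i) a = 0"
  shows "lpsi x a = 0"
proof -
  obtain c where c: "x = (\<Sum>i<l. sc (c i) (cr i))" using x unfolding Hc_def by blast
  have "lpsi x a = lsum (*) a (\<lambda>m. \<Sum>i<l. c i * psi1 (cr i) m)"
    unfolding lpsi_def
  proof (rule lsum_G_cong)
    fix m assume "a m \<noteq> 0"
    then have m: "m \<in> EE" using lau_expo[OF a] by blast
    have mem: "sc (c i) (cr i) \<in> h1" if "i < l" for i using cs_sc[OF h1_sub cr_h1[OF that]] .
    have "psi1 (\<Sum>i<l. sc (c i) (cr i)) m = (\<Sum>i<l. psi1 (sc (c i) (cr i)) m)"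
      by (rule psi1_sum) (use mem m in \<open>simp_all only: lessThan_iff finite_lessThan\<close>)
    also have "\<dots> = (\<Sum>i<l. c i * psi1 (cr i) m)"
      by (rule sum.cong) (use psi1_sc[OF cr_h1 m] in auto)
    finally show "psi1 x m = (\<Sum>i<l. c i * psi1 (cr i) m)" unfolding c .
  qed
  also have "\<dots> = (\<Sum>i<l. c i * lpsi (cr i) a)"
    by (simp add: lsum_G_sum[OF VSC] lsum_G_scale[OF VSC] lpsi_def)
  finally show ?thesis using z by simp
qed

section \<open>Weights in V\<close>

definition lam0 :: "'g \<Rightarrow> complex" where
  "lam0 x = (if x \<in> h2 then psi2 x else psi1 x (\<lambda>i. 0))"

abbreviation "WV \<equiv> weight_space h1 h2 sv act actd"

lemma lam0_h1: "x \<in> h1 \<Longrightarrow> lam0 x = psi1 x (\<lambda>i. 0)"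
proof -
  assume x: "x \<in> h1"
  show ?thesis
  proof (cases "x \<in> h2")
    case True
    then have "x = 0" using x h2_compl(1) by blast
    then show ?thesis using True psi2_0 psi1_0[OF expo_0] by (simp add: lam0_def)
  qed (simp add: lam0_def)
qed

lemma lam0_h2: "x \<in> h2 \<Longrightarrow> lam0 x = psi2 x" by (simp add: lam0_def)

lemma WV_0: "0 \<in> WV \<mu>"
  unfolding weight_space_def using expo_0 by simp

lemma WV_add: "u \<in> WV \<mu> \<Longrightarrow> w \<in> WV \<mu> \<Longrightarrow> u + w \<in> WV \<mu>"
  unfolding weight_space_def using expo_0 by (simp add: act_addv actd_addv V.scale_right_distrib)

lemma WV_sc: "u \<in> WV \<mu> \<Longrightarrow> sv c u \<in> WV \<mu>"
  unfolding weight_space_def using expo_0 by (simp add: act_scv actd_scv mult.commute)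

lemma WV_cs: "csubspace sv (WV \<mu>)"
  unfolding csubspace_def using WV_0 WV_add WV_sc by blast

lemma v0_WV: "v0 \<in> WV lam0"
  unfolding weight_space_def using hw_h1 expo_0 hw_h2 lam0_h1 lam0_h2 by auto

lemma WV_cong: "(\<And>x. x \<in> h1 \<Longrightarrow> \<mu> x = \<nu> x) \<Longrightarrow> (\<And>x. x \<in> h2 \<Longrightarrow> \<mu> x = \<nu> x) \<Longrightarrow> WV \<mu> = WV \<nu>"
  unfolding weight_space_def by auto

lemma WV_lact_v0:
  assumes y: "y \<in> D" "y \<in> root_space sc br hh \<mu>" and a: "a \<in> laurent n"
  shows "lact y a v0 \<in> WV (\<lambda>x. lam0 x + \<mu> x)"
  unfolding weight_space_def
proof (intro CollectI conjI ballI)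
  fix x assume x: "x \<in> h1"
  have "act x (\<lambda>_. 0) (lact y a v0) = lact y a (act x (\<lambda>_. 0) v0) + lact (br x y) (shift (\<lambda>_. 0) a) v0"
    using x by (intro lact_comm[OF _ y(1) expo_0 a]) simp
  also have "\<dots> = lact y a (sv (lam0 x) v0) + lact (sc (\<mu> x) y) a v0"
    using x y hw_h1[OF x expo_0] lam0_h1[OF x] by (simp add: shift_0 root_space_def)
  also have "\<dots> = sv (lam0 x + \<mu> x) (lact y a v0)"
    using y a by (simp add: lact_scv lact_scX V.scale_left_distrib)
  finally show "act x (\<lambda>_. 0) (lact y a v0) = sv (lam0 x + \<mu> x) (lact y a v0)" .
next
  fix x assume x: "x \<in> h2"
  have "actd x (lact y a v0) = lact y a (actd x v0) + lact (br x y) a v0"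
    by (rule lactd_comm[OF x y(1) a])
  also have "\<dots> = lact y a (sv (lam0 x) v0) + lact (sc (\<mu> x) y) a v0"
    using x y hw_h2[OF x] lam0_h2[OF x] h2_hh[OF x] by (simp add: root_space_def)
  also have "\<dots> = sv (lam0 x + \<mu> x) (lact y a v0)"
    using y a by (simp add: lact_scv lact_scX V.scale_left_distrib)
  finally show "actd x (lact y a v0) = sv (lam0 x + \<mu> x) (lact y a v0)" .
qed

lemma WV_f:
  assumes u: "u \<in> WV \<mu>" and j: "j < l" and m: "m \<in> EE"
  shows "act (f j) m u \<in> WV (\<lambda>x. \<mu> x - al j x)"
  unfolding weight_space_def
proof (intro CollectI conjI ballI)
  fix x assume x: "x \<in> h1"
  have "act x (\<lambda>_. 0) (act (f j) m u) = act (f j) m (act x (\<lambda>_. 0) u) + act (br x (f j)) (\<lambda>i. 0 + m i) u"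
    using x by (intro act_comm[OF _ f_D[OF j] expo_0 m]) simp
  also have "act (br x (f j)) (\<lambda>i. 0 + m i) u = sv (- al j x) (act (f j) m u)"
  proof -
    have bx: "br x (f j) = sc (- al j x) (f j)" using x j br_hf by auto
    have "act (br x (f j)) (\<lambda>i. 0 + m i) u = act (sc (- al j x) (f j)) m u"
      by (simp only: bx add_0)
    also have "\<dots> = sv (- al j x) (act (f j) m u)" by (rule act_scX[OF f_D[OF j] m])
    finally show ?thesis .
  qed
  also have "act (f j) m (act x (\<lambda>_. 0) u) = sv (\<mu> x) (act (f j) m u)"
    using u x j m f_D[OF j] by (simp add: weight_space_def act_scv)
  also have "sv (\<mu> x) (act (f j) m u) + sv (- al j x) (act (f j) m u) = sv (\<mu> x - al j x) (act (f j) m u)"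
    by (simp add: V.scale_left_diff_distrib)
  finally show "act x (\<lambda>_. 0) (act (f j) m u) = sv (\<mu> x - al j x) (act (f j) m u)" .
next
  fix x assume x: "x \<in> h2"
  have "actd x (act (f j) m u) = act (f j) m (actd x u) + act (br x (f j)) m u"
    by (rule actd_comm[OF x f_D[OF j] m])
  also have "act (br x (f j)) m u = sv (- al j x) (act (f j) m u)"
  proof -
    have bx: "br x (f j) = sc (- al j x) (f j)" using h2_hh[OF x] j br_hf by auto
    show ?thesis unfolding bx by (rule act_scX[OF f_D[OF j] m])
  qed
  also have "act (f j) m (actd x u) = sv (\<mu> x) (act (f j) m u)"
    using u x j m f_D[OF j] by (simp add: weight_space_def act_scv)
  also have "sv (\<mu> x) (act (f j) m u) + sv (- al j x) (act (f j) m u) = sv (\<mu> x - al j x) (act (f j) m u)"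
    by (simp add: V.scale_left_diff_distrib)
  finally show "actd x (act (f j) m u) = sv (\<mu> x - al j x) (act (f j) m u)" .
qed

lemma cs_sum: "csubspace s S \<Longrightarrow> (\<And>i. i \<in> I \<Longrightarrow> g i \<in> S) \<Longrightarrow> sum g I \<in> S"
  by (induction I rule: infinite_finite_induct) (auto intro: cs_add cs_0)

lemma lsum_in_cs: "csubspace sv W \<Longrightarrow> (\<And>m. a m \<noteq> 0 \<Longrightarrow> G m \<in> W) \<Longrightarrow> lsum sv a G \<in> W"
  unfolding lsum_def by (rule cs_sum) (auto intro: cs_sc)

lemma WV_lact_f:
  assumes u: "u \<in> WV \<mu>" and j: "j < l" and a: "a \<in> laurent n"
  shows "lact (f j) a u \<in> WV (\<lambda>x. \<mu> x - al j x)"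
  unfolding lact_def by (rule lsum_in_cs[OF WV_cs]) (use u j a lau_expo WV_f in blast)

end



context KMS begin

lemma e_nplus: assumes i: "i < l" shows "e i \<in> nplus sc br l hh al"
  unfolding nplus_def
proof (rule InterI)
  fix S assume "S \<in> {S. csubspace sc S \<and>
      (\<forall>k::nat \<Rightarrow> nat. (\<exists>i<l. k i \<noteq> 0) \<longrightarrow>
          root_space sc br hh (\<lambda>y. \<Sum>i<l. of_nat (k i) * al i y) \<subseteq> S)}"
  then have S: "root_space sc br hh (\<lambda>y. \<Sum>j<l. of_nat (dl i j) * al j y) \<subseteq> S"
    using i by (auto simp: dl_def)
  have "e i \<in> root_space sc br hh (wtn (dl i))"
    using br_he i by (simp add: root_space_def wtn_dl)
  moreover have "wtn (dl i) = (\<lambda>y. \<Sum>j<l. of_nat (dl i j) * al j y)" by (rule ext) (simp add: wtn_def)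
  ultimately show "e i \<in> S" using S by auto
qed

lemma e_v0: "i < l \<Longrightarrow> m \<in> EE \<Longrightarrow> act (e i) m v0 = 0"
  using hw(2) e_nplus by blast

lemma H_distinct: assumes "\<exists>i<l. c i \<noteq> 0" shows "\<exists>x\<in>h1 \<union> h2. (\<Sum>i<l. c i * al i x) \<noteq> 0"
proof (rule ccontr)
  assume "\<not> ?thesis"
  then have z: "\<And>x. x \<in> h1 \<union> h2 \<Longrightarrow> (\<Sum>i<l. c i * al i x) = 0" by blast
  have "\<forall>y\<in>hh. (\<Sum>i<l. c i * al i y) = 0"
  proof
    fix y assume y: "y \<in> hh"
    then obtain a b where ab: "a \<in> h1" "b \<in> h2" "y = a + b" using h2_compl(2) by blast
    have "(\<Sum>i<l. c i * al i y) = (\<Sum>i<l. c i * al i a) + (\<Sum>i<l. c i * al i b)"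
      unfolding ab(3) sum.distrib[symmetric]
      by (rule sum.cong) (use ab h2_hh in \<open>auto simp: al_add distrib_left\<close>)
    then show "(\<Sum>i<l. c i * al i y) = 0" using z ab by simp
  qed
  then have "\<forall>i<l. c i = 0" using al_indep by blast
  then show False using assms by auto
qed

lemma al_distinct: assumes "i < l" "j < l" "i \<noteq> j" shows "\<exists>x\<in>h1 \<union> h2. al j x \<noteq> al i x"
proof -
  let ?c = "\<lambda>k. if k = j then 1 else if k = i then -1 else (0::complex)"
  have "\<exists>k<l. ?c k \<noteq> 0" using assms by (intro exI[of _ j]) auto
  from H_distinct[OF this] obtain x where x: "x \<in> h1 \<union> h2" "(\<Sum>k<l. ?c k * al k x) \<noteq> 0"
    by blast
  have "(\<Sum>k<l. ?c k * al k x) = (\<Sum>k<l. (if k = j then al k x else 0) + (if k = i then - al k x else 0))"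
    by (rule sum.cong) (use assms in auto)
  also have "\<dots> = al j x - al i x" using assms by (simp add: sum.distrib)
  finally show ?thesis using x by auto
qed

definition TT :: "'g \<Rightarrow> 'v \<Rightarrow> 'v" where
  "TT x = (if x \<in> h2 then actd x else act x (\<lambda>_. 0))"

lemma TT_WV: "u \<in> WV \<mu> \<Longrightarrow> x \<in> h1 \<union> h2 \<Longrightarrow> TT x u = sv (\<mu> x) u"
  unfolding TT_def weight_space_def by auto

lemma indepV:
  assumes w0: "w0 \<in> WV mb" and fin: "finite S"
    and g: "\<And>j. j \<in> S \<Longrightarrow> g j \<in> WV (\<mu> j)"
    and d: "\<And>j. j \<in> S \<Longrightarrow> \<exists>x\<in>h1 \<union> h2. \<mu> j x \<noteq> mb x"
    and s: "w0 + sum g S = 0"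
  shows "w0 = 0"
proof (rule indep_weights[OF VSv _ _ fin _ _ d s, where T=TT])
  show "TT h (x + y) = TT h x + TT h y" if "h \<in> h1 \<union> h2" for h x y
    using that expo_0 by (auto simp: TT_def act_addv actd_addv)
  show "TT h (sv c x) = sv c (TT h x)" if "h \<in> h1 \<union> h2" for h c x
    using that expo_0 by (auto simp: TT_def act_scv actd_scv)
  show "TT h w0 = sv (mb h) w0" if "h \<in> h1 \<union> h2" for h using TT_WV[OF w0 that] .
  show "TT h (g j) = sv (\<mu> j h) (g j)" if "j \<in> S" "h \<in> h1 \<union> h2" for j h using TT_WV[OF g[OF that(1)] that(2)] .
qed

lemma indepV_list:
  assumes w0: "w0 \<in> WV mb"
    and g: "\<And>p. p \<in> set L \<Longrightarrow> snd p \<in> WV (fst p)"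
    and d: "\<And>p. p \<in> set L \<Longrightarrow> \<exists>x\<in>h1 \<union> h2. fst p x \<noteq> mb x"
    and s: "w0 + sum_list (map snd L) = 0"
  shows "w0 = 0"
proof (rule indep_weights_list[OF VSv _ _ _ _ d s, where T=TT])
  show "TT h (x + y) = TT h x + TT h y" if "h \<in> h1 \<union> h2" for h x y
    using that expo_0 by (auto simp: TT_def act_addv actd_addv)
  show "TT h (sv c x) = sv c (TT h x)" if "h \<in> h1 \<union> h2" for h c x
    using that expo_0 by (auto simp: TT_def act_scv actd_scv)
  show "TT h w0 = sv (mb h) w0" if "h \<in> h1 \<union> h2" for h using TT_WV[OF w0 that] .
  show "TT h (snd p) = sv (fst p h) (snd p)" if "p \<in> set L" "h \<in> h1 \<union> h2" for p h using TT_WV[OF g[OF that(1)] that(2)] .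
qed

lemma in_fspan_span: "in_fspan sv B w \<Longrightarrow> w \<in> V.span B"
proof -
  assume "in_fspan sv B w"
  then obtain c where w: "w = (\<Sum>b\<in>B. sv (c b) b)" unfolding in_fspan_def by blast
  show ?thesis unfolding w
  proof (rule V.span_sum)
    fix b assume "b \<in> B"
    then show "sv (c b) b \<in> V.span B" by (intro V.span_scale V.span_base)
  qed
qed

definition JJ :: "((nat \<Rightarrow> int) \<Rightarrow> complex) set" where
  "JJ = {a \<in> laurent n. \<forall>i<l. \<forall>m\<in>EE. lpsi (cr i) (shift m a) = 0}"

lemma JJ_ideal: "laurent_ideal n JJ"
  unfolding laurent_ideal_def
proof (intro conjI ballI)
  show "JJ \<subseteq> laurent n" by (auto simp: JJ_def)
  have "shift m (\<lambda>_. 0) = (\<lambda>_. 0)" for m by (simp add: shift_def)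
  then show "(\<lambda>_. 0) \<in> JJ" by (simp add: JJ_def zero_lau lpsi_def)
next
  fix a b assume a: "a \<in> JJ" and b: "b \<in> JJ"
  have "lpsi (cr i) (shift m (\<lambda>m. a m + b m)) = 0" if "i < l" "m \<in> EE" for i m
  proof -
    have "shift m (\<lambda>m. a m + b m) = (\<lambda>j. shift m a j + shift m b j)" by (simp add: shift_def)
    moreover have "finite {j. shift m a j \<noteq> 0}" "finite {j. shift m b j \<noteq> 0}"
      using a b that shift_lau lau_fin by (auto simp: JJ_def)
    ultimately have "lpsi (cr i) (shift m (\<lambda>m. a m + b m)) = lpsi (cr i) (shift m a) + lpsi (cr i) (shift m b)"
      by (simp add: lpsi_def lsum_add[OF VSC])
    then show ?thesis using a b that by (simp add: JJ_def)
  qed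
  then show "(\<lambda>m. a m + b m) \<in> JJ" using a b add_lau by (simp add: JJ_def)
next
  fix c b assume c: "c \<in> laurent n" and b: "b \<in> JJ"
  have bl: "b \<in> laurent n" using b by (simp add: JJ_def)
  have "lpsi (cr i) (shift m (lmult c b)) = 0" if "i < l" "m \<in> EE" for i m
  proof -
    let ?K = "{k. c k \<noteq> 0}"
    have kE: "k \<in> ?K \<Longrightarrow> (\<lambda>i. m i + k i) \<in> EE" for k using lau_expo[OF c] that(2) expo_add by auto
    have "lpsi (cr i) (shift m (lmult c b)) = lsum (*) (\<lambda>j. \<Sum>k\<in>?K. c k * shift (\<lambda>i. m i + k i) b j) (psi1 (cr i))"
      by (simp add: lpsi_def shift_lmult_expand)
    also have "\<dots> = (\<Sum>k\<in>?K. lsum (*) (\<lambda>j. c k * shift (\<lambda>i. m i + k i) b j) (psi1 (cr i)))"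
    proof (rule lsum_sum[OF VSC])
      show "finite ?K" using lau_fin[OF c] .
      show "finite {j. c k * shift (\<lambda>i. m i + k i) b j \<noteq> 0}" if "k \<in> ?K" for k
        using lau_fin[OF sc_lau[OF shift_lau[OF bl kE[OF that]]]] .
    qed
    also have "\<dots> = (\<Sum>k\<in>?K. c k * lpsi (cr i) (shift (\<lambda>i. m i + k i) b))"
      by (simp add: lsum_scale[OF VSC] lpsi_def)
    also have "\<dots> = 0" using b that kE by (simp add: JJ_def)
    finally show ?thesis .
  qed
  then show "lmult c b \<in> JJ" using lmult_lau[OF c bl] by (simp add: JJ_def)
qed

lemma JJ_Hc: "x \<in> h1 \<Longrightarrow> a \<in> JJ \<Longrightarrow> lpsi x a = 0"
proof -
  assume x: "x \<in> h1" and a: "a \<in> JJ"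
  have "lpsi (cr i) a = 0" if "i < l" for i
    using a that expo_0 shift_0[of a] by (force simp: JJ_def)
  then show ?thesis using lpsi_Hc[OF h1_Hc[OF x]] a by (simp add: JJ_def)
qed

lemma fwd:
  assumes FD: "\<forall>lam. fin_dim sv (WV lam)"
  shows "\<exists>I. cofinite_ideal n I \<and> (\<forall>x\<in>h1. \<forall>a\<in>I. lpsi x a = 0)"
proof -
  define lamf where "lamf i = (\<lambda>x. lam0 x + - al i x)" for i
  have fWV: "lact (f i) a v0 \<in> WV (lamf i)" if "i < l" "a \<in> laurent n" for i a
    unfolding lamf_def
    by (rule WV_lact_v0[OF f_D[OF that(1)] _ that(2)]) (simp add: root_space_def br_hf that(1))
  have "\<forall>i. \<exists>B. finite B \<and> (\<forall>w\<in>WV (lamf i). in_fspan sv B w)"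
    using FD unfolding fin_dim_def by blast
  then obtain Bf where Bf0: "\<forall>i. finite (Bf i) \<and> (\<forall>w\<in>WV (lamf i). in_fspan sv (Bf i) w)"
    by (rule choice[THEN exE])
  then have Bf: "\<And>i. finite (Bf i)" "\<And>i w. w \<in> WV (lamf i) \<Longrightarrow> in_fspan sv (Bf i) w"
    by auto
  define Bw where "Bw = (\<Union>i<l. Bf i)"
  have finBw: "finite Bw" unfolding Bw_def using Bf(1) by auto
  define G where "G m = (\<Sum>i<l. act (f i) m v0)" for m
  have LG: "lsum sv a G = (\<Sum>i<l. lact (f i) a v0)" for a
    unfolding G_def lact_def by (rule lsum_G_sum[OF VSv]) simp
  have img: "lsum sv a G \<in> V.span Bw" if "a \<in> laurent n" for a
    unfolding LG
  proof (rule V.span_sum)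
    fix i assume i: "i \<in> {..<l}"
    have il: "i < l" using i by simp
    have "lact (f i) a v0 \<in> V.span (Bf i)" by (rule in_fspan_span[OF Bf(2)[OF fWV[OF il that]]])
    moreover have "V.span (Bf i) \<subseteq> V.span Bw" by (rule V.span_mono) (use il in \<open>auto simp: Bw_def\<close>)
    ultimately show "lact (f i) a v0 \<in> V.span Bw" by auto
  qed
  have "\<exists>B'. finite B' \<and> B' \<subseteq> laurent n \<and>
     (\<forall>a\<in>laurent n. \<exists>c. lsum sv (\<lambda>m. a m - (\<Sum>b\<in>B'. c b * b m)) G = 0)"
    by (rule cofinite_kernel[OF VSv finBw img])
  then obtain B' where B'0: "finite B' \<and> B' \<subseteq> laurent n \<and>
     (\<forall>a\<in>laurent n. \<exists>c. lsum sv (\<lambda>m. a m - (\<Sum>b\<in>B'. c b * b m)) G = 0)"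
    by (rule exE)
  note B' = B'0[THEN conjunct1] B'0[THEN conjunct2, THEN conjunct1] B'0[THEN conjunct2, THEN conjunct2]
  have ker: "a \<in> JJ" if a: "a \<in> laurent n" and Z: "lsum sv a G = 0" for a
  proof -
    have z: "lact (f i) a v0 = 0" if i: "i < l" for i
    proof (rule indepV[where S="{..<l} - {i}" and g="\<lambda>j. lact (f j) a v0" and \<mu>=lamf])
      show "lact (f i) a v0 \<in> WV (lamf i)" using fWV i a by blast
      show "finite ({..<l} - {i})" by simp
      show "lact (f j) a v0 \<in> WV (lamf j)" if "j \<in> {..<l} - {i}" for j using fWV that a by blast
      show "\<exists>x\<in>h1 \<union> h2. lamf j x \<noteq> lamf i x" if "j \<in> {..<l} - {i}" for j
        using al_distinct[of i j] that i by (auto simp: lamf_def)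
      have "(\<Sum>j<l. lact (f j) a v0) = lact (f i) a v0 + (\<Sum>j\<in>{..<l} - {i}. lact (f j) a v0)"
        using i by (simp add: sum.remove)
      then show "lact (f i) a v0 + (\<Sum>j\<in>{..<l} - {i}. lact (f j) a v0) = 0" using Z LG by simp
    qed
    have "lpsi (cr i) (shift m a) = 0" if i: "i < l" and m: "m \<in> EE" for i m
    proof -
      have "0 = act (e i) m (lact (f i) a v0)" using z[OF i] e_D[OF i] m by simp
      also have "\<dots> = lact (f i) a (act (e i) m v0) + lact (br (e i) (f i)) (shift m a) v0"
        by (rule lact_comm[OF e_D[OF i] f_D[OF i] m a])
      also have "\<dots> = sv (lpsi (cr i) (shift m a)) v0"
        using e_v0[OF i m] lact_0v[OF f_D[OF i] a] br_ef[OF i i] lact_h1_v0[OF cr_h1[OF i] shift_lau[OF a m]]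
        by simp
      finally show ?thesis using hw(1) by simp
    qed
    then show ?thesis using a by (simp add: JJ_def)
  qed
  have "cofinite_ideal n JJ"
    unfolding cofinite_ideal_def
  proof (intro conjI exI[of _ B'])
    show "laurent_ideal n JJ" by (rule JJ_ideal)
    show "finite B'" "B' \<subseteq> laurent n" using B' by auto
    show "\<forall>a\<in>laurent n. \<exists>c. (\<lambda>m. a m - (\<Sum>b\<in>B'. c b * b m)) \<in> JJ"
    proof
      fix a assume a: "a \<in> laurent n"
      then obtain c where "lsum sv (\<lambda>m. a m - (\<Sum>b\<in>B'. c b * b m)) G = 0" using B'(3) by blast
      then have "(\<lambda>m. a m - (\<Sum>b\<in>B'. c b * b m)) \<in> JJ"
        using ker lincomb_lau[OF a B'(1,2)] by blast
      then show "\<exists>c. (\<lambda>m. a m - (\<Sum>b\<in>B'. c b * b m)) \<in> JJ" by blast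
    qed
  qed
  then show ?thesis using JJ_Hc by blast
qed

end



context KMS begin

inductive_set FS :: "'v set \<Rightarrow> 'v set" for U where
  FS_base: "u \<in> U \<Longrightarrow> u \<in> FS U"
| FS_zero: "0 \<in> FS U"
| FS_add: "u \<in> FS U \<Longrightarrow> w \<in> FS U \<Longrightarrow> u + w \<in> FS U"
| FS_sc: "u \<in> FS U \<Longrightarrow> sv c u \<in> FS U"
| FS_f: "u \<in> FS U \<Longrightarrow> j < l \<Longrightarrow> m \<in> EE \<Longrightarrow> act (f j) m u \<in> FS U"

lemma FS_cs: "csubspace sv (FS U)"
  unfolding csubspace_def by (auto intro: FS.intros)

lemma FS_diff: "u \<in> FS U \<Longrightarrow> w \<in> FS U \<Longrightarrow> u - w \<in> FS U"
proof -
  assume "u \<in> FS U" "w \<in> FS U"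
  then have "u + sv (-1) w \<in> FS U" by (intro FS_add FS_sc)
  then show ?thesis by simp
qed

definition goodU :: "'v set \<Rightarrow> bool" where
  "goodU U \<longleftrightarrow> (\<forall>u\<in>U. \<forall>x\<in>h1. \<forall>m\<in>EE. act x m u \<in> FS U)
     \<and> (\<forall>u\<in>U. \<forall>x\<in>h2. actd x u \<in> FS U)
     \<and> (\<forall>u\<in>U. \<forall>i<l. \<forall>m\<in>EE. act (e i) m u \<in> FS U)"

lemma brhf_act: "x \<in> hh \<Longrightarrow> j < l \<Longrightarrow> k \<in> EE \<Longrightarrow> act (br x (f j)) k u = sv (- al j x) (act (f j) k u)"
proof -
  assume x: "x \<in> hh" and j: "j < l" and k: "k \<in> EE"
  have bx: "br x (f j) = sc (- al j x) (f j)" using x j br_hf by auto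
  show ?thesis unfolding bx by (rule act_scX[OF f_D[OF j] k])
qed

lemma INV_h1:
  assumes g: "goodU U" and v: "v \<in> FS U" and x: "x \<in> h1" and m: "m \<in> EE"
  shows "act x m v \<in> FS U"
  using v m
proof (induction v arbitrary: m rule: FS.induct)
  case (FS_base u)
  then show ?case using g x by (auto simp: goodU_def)
next
  case FS_zero
  then show ?case using x by (simp add: FS.intros)
next
  case (FS_add u w)
  then show ?case using x by (simp add: act_addv FS.intros)
next
  case (FS_sc u c)
  then show ?case using x by (simp add: act_scv FS.intros)
next
  case (FS_f u j k)
  note u = FS_f.hyps(1) and j = FS_f.hyps(2) and k = FS_f.hyps(3) and mm = FS_f.prems
  have mk: "(\<lambda>i. m i + k i) \<in> EE" by (rule expo_add[OF mm k])
  have "act x m (act (f j) k u) = act (f j) k (act x m u) + act (br x (f j)) (\<lambda>i. m i + k i) u"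
    using x by (intro act_comm[OF _ f_D[OF j] mm k]) simp
  also have "act (br x (f j)) (\<lambda>i. m i + k i) u = sv (- al j x) (act (f j) (\<lambda>i. m i + k i) u)"
    using x by (intro brhf_act[OF _ j mk]) simp
  finally have eq: "act x m (act (f j) k u) = act (f j) k (act x m u) + sv (- al j x) (act (f j) (\<lambda>i. m i + k i) u)" .
  show ?case unfolding eq by (rule FS_add[OF FS.FS_f[OF FS_f.IH[OF mm] j k] FS_sc[OF FS.FS_f[OF u j mk]]])
qed

lemma INV_h2:
  assumes g: "goodU U" and v: "v \<in> FS U" and x: "x \<in> h2"
  shows "actd x v \<in> FS U"
  using v
proof (induction v rule: FS.induct)
  case (FS_base u)
  then show ?case using g x by (auto simp: goodU_def)
next
  case FS_zero
  then show ?case using x by (simp add: FS.intros)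
next
  case (FS_add u w)
  then show ?case using x by (simp add: actd_addv FS.intros)
next
  case (FS_sc u c)
  then show ?case using x by (simp add: actd_scv FS.intros)
next
  case (FS_f u j k)
  note u = FS_f.hyps(1) and j = FS_f.hyps(2) and k = FS_f.hyps(3)
  have "actd x (act (f j) k u) = act (f j) k (actd x u) + act (br x (f j)) k u"
    by (rule actd_comm[OF x f_D[OF j] k])
  also have "act (br x (f j)) k u = sv (- al j x) (act (f j) k u)"
    by (rule brhf_act[OF h2_hh[OF x] j k])
  finally have eq: "actd x (act (f j) k u) = act (f j) k (actd x u) + sv (- al j x) (act (f j) k u)" .
  show ?case unfolding eq by (rule FS_add[OF FS.FS_f[OF FS_f.IH j k] FS_sc[OF FS.FS_f[OF u j k]]])
qed

lemma INV_e:
  assumes g: "goodU U" and v: "v \<in> FS U" and i: "i < l" and m: "m \<in> EE"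
  shows "act (e i) m v \<in> FS U"
  using v m
proof (induction v arbitrary: m rule: FS.induct)
  case (FS_base u)
  then show ?case using g i by (auto simp: goodU_def)
next
  case FS_zero
  then show ?case using e_D[OF i] by (simp add: FS.intros)
next
  case (FS_add u w)
  then show ?case using e_D[OF i] by (simp add: act_addv FS.intros)
next
  case (FS_sc u c)
  then show ?case using e_D[OF i] by (simp add: act_scv FS.intros)
next
  case (FS_f u j k)
  note u = FS_f.hyps(1) and j = FS_f.hyps(2) and k = FS_f.hyps(3) and mm = FS_f.prems
  have mk: "(\<lambda>i. m i + k i) \<in> EE" by (rule expo_add[OF mm k])
  have "act (e i) m (act (f j) k u) = act (f j) k (act (e i) m u) + act (br (e i) (f j)) (\<lambda>i. m i + k i) u"
    by (rule act_comm[OF e_D[OF i] f_D[OF j] mm k])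
  moreover have "act (br (e i) (f j)) (\<lambda>i. m i + k i) u \<in> FS U"
  proof (cases "i = j")
    case True
    then have "br (e i) (f j) = cr i" using br_ef[OF i j] by simp
    then show ?thesis using INV_h1[OF g u cr_h1[OF i] mk] by simp
  next
    case False
    then have "br (e i) (f j) = 0" using br_ef[OF i j] by simp
    then show ?thesis using mk by (simp add: FS.intros)
  qed
  ultimately show ?case using FS_add[OF FS.FS_f[OF FS_f.IH[OF mm] j k]] by simp
qed

lemma act_br_gen:
  assumes g: "g \<in> D" and X: "X \<in> D" and m: "m \<in> EE"
  shows "act (br g X) m v = act g (\<lambda>i. 0) (act X m v) - act X m (act g (\<lambda>i. 0) v)"
proof -
  have "act g (\<lambda>i. 0) (act X m v) = act X m (act g (\<lambda>i. 0) v) + act (br g X) (\<lambda>i. 0 + m i) v"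
    by (rule act_comm[OF g X expo_0 m])
  then show ?thesis by simp
qed

lemma INV_NS:
  assumes gen_D: "\<And>i. i < l \<Longrightarrow> gen i \<in> D"
    and gen_ok: "\<And>i m v. i < l \<Longrightarrow> m \<in> EE \<Longrightarrow> v \<in> FS U \<Longrightarrow> act (gen i) m v \<in> FS U"
    and X: "X \<in> NS gen"
  shows "\<forall>m v. m \<in> EE \<longrightarrow> v \<in> FS U \<longrightarrow> act X m v \<in> FS U"
  using X
proof (induction X rule: NS.induct)
  case (NS_gen i)
  then show ?case using gen_ok by blast
next
  case NS_zero
  then show ?case by (simp add: FS.intros)
next
  case (NS_add x y)
  have "x \<in> D" "y \<in> D" using NS_add.hyps NS_D[where gen=gen, OF gen_D] by auto
  then show ?case using NS_add by (simp add: act_addX FS.intros)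
next
  case (NS_sc x c)
  have "x \<in> D" using NS_sc(1) NS_D[where gen=gen, OF gen_D] by auto
  then show ?case using NS_sc by (simp add: act_scX FS.intros)
next
  case (NS_br i x)
  have xD: "x \<in> D" using NS_br(2) NS_D[where gen=gen, OF gen_D] by auto
  show ?case
  proof (intro allI impI)
    fix m v assume m: "m \<in> EE" and v: "v \<in> FS U"
    have "act (br (gen i) x) m v = act (gen i) (\<lambda>i. 0) (act x m v) - act x m (act (gen i) (\<lambda>i. 0) v)"
      by (rule act_br_gen[OF gen_D[OF NS_br(1)] xD m])
    then show "act (br (gen i) x) m v \<in> FS U"
      using NS_br m v gen_ok[OF NS_br(1) expo_0] by (simp add: FS_diff)
  qed
qed

lemma INV_D:
  assumes g: "goodU U" and X: "X \<in> D" and m: "m \<in> EE" and v: "v \<in> FS U"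
  shows "act X m v \<in> FS U"
proof -
  from X D_RR obtain a c b where abc: "a \<in> Nm" "c \<in> Hc" "b \<in> Np" "X = a + c + b"
    by (auto elim!: ssumE)
  have aD: "a \<in> D" "c \<in> D" "b \<in> D" using abc Nm_D Np_D Hc_h1 by auto
  have "act X m v = act a m v + act c m v + act b m v"
    using aD m abc(4) cs_add[OF D_sub aD(1,2)] by (simp add: act_addX)
  moreover have "act a m v \<in> FS U"
    using INV_NS[OF f_D _ abc(1)] m v FS.FS_f by blast
  moreover have "act c m v \<in> FS U" using INV_h1[OF g v Hc_h1[OF abc(2)] m] .
  moreover have "act b m v \<in> FS U"
    using INV_NS[OF e_D _ abc(3)] m v INV_e[OF g] by blast
  ultimately show ?thesis by (simp add: FS.intros)
qed

lemma FS_triv: assumes g: "goodU U" shows "FS U = {0} \<or> FS U = UNIV"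
  by (rule irr_W[OF FS_cs]) (use INV_D[OF g] INV_h2[OF g] in blast)+

lemma FS_v0: "FS {v0} = UNIV"
proof -
  have "goodU {v0}" unfolding goodU_def
    using hw_h1 hw_h2 e_v0 by (auto intro: FS.intros)
  then have "FS {v0} = {0} \<or> FS {v0} = UNIV" by (rule FS_triv)
  moreover have "v0 \<in> FS {v0}" by (simp add: FS.intros)
  ultimately show ?thesis using hw(1) by auto
qed

end



context KMS begin

lemma act_sum_list: "X \<in> D \<Longrightarrow> m \<in> EE \<Longrightarrow> act X m (sum_list (map g L)) = sum_list (map (\<lambda>p. act X m (g p)) L)"
  by (induction L) (simp_all add: act_addv)

lemma sv_sum_list: "sv c (sum_list (map g L)) = sum_list (map (\<lambda>p. sv c (g p)) L)"
  by (induction L) (simp_all add: V.scale_right_distrib)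

lemma neg_sum_list: "- sum_list (map (g :: 'a \<Rightarrow> 'v) L) = sum_list (map (\<lambda>p. - g p) L)"
  by (induction L) (simp_all add: minus_add_distrib)

lemma rv_D: assumes "nz k" "y \<in> root_space sc br hh (\<lambda>z. - wtn k z)" shows "y \<in> D"
proof -
  obtain h where h: "h \<in> hh" "wtn k h \<noteq> 0" using wtn_nonzero[OF assms(1)] by blast
  have eq: "br h y = sc (- wtn k h) y" using assms(2) h(1) by (simp add: root_space_def)
  show ?thesis by (rule rootvec_D[OF h(1) eq]) (use h(2) in simp)
qed

definition WSV :: "'v set" where
  "WSV = {v. \<exists>L. v = sum_list (map snd L) \<and>
     (\<forall>p\<in>set L. nz (fst p) \<and> snd p \<in> WV (\<lambda>x. lam0 x - wtn (fst p) x))}"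

lemma WSV_add: "u \<in> WSV \<Longrightarrow> w \<in> WSV \<Longrightarrow> u + w \<in> WSV"
proof -
  assume "u \<in> WSV" "w \<in> WSV"
  then obtain L L' where "u = sum_list (map snd L)" "w = sum_list (map snd L')"
    "\<forall>p\<in>set L. nz (fst p) \<and> snd p \<in> WV (\<lambda>x. lam0 x - wtn (fst p) x)"
    "\<forall>p\<in>set L'. nz (fst p) \<and> snd p \<in> WV (\<lambda>x. lam0 x - wtn (fst p) x)"
    unfolding WSV_def by blast
  then show ?thesis unfolding WSV_def by (intro CollectI exI[of _ "L @ L'"]) auto
qed

lemma WSV_sc: "u \<in> WSV \<Longrightarrow> sv c u \<in> WSV"
proof -
  assume "u \<in> WSV"
  then obtain L where L: "u = sum_list (map snd L)"
    "\<forall>p\<in>set L. nz (fst p) \<and> snd p \<in> WV (\<lambda>x. lam0 x - wtn (fst p) x)"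
    unfolding WSV_def by blast
  have "sv c u = sum_list (map snd (map (\<lambda>p. (fst p, sv c (snd p))) L))"
    unfolding L(1) sv_sum_list by (simp add: comp_def)
  then show ?thesis unfolding WSV_def using L(2) WV_sc
    by (intro CollectI exI[of _ "map (\<lambda>p. (fst p, sv c (snd p))) L"]) auto
qed

lemma WSV_f: "u \<in> WSV \<Longrightarrow> j < l \<Longrightarrow> m \<in> EE \<Longrightarrow> act (f j) m u \<in> WSV"
proof -
  assume u: "u \<in> WSV" and j: "j < l" and m: "m \<in> EE"
  then obtain L where L: "u = sum_list (map snd L)"
    "\<forall>p\<in>set L. nz (fst p) \<and> snd p \<in> WV (\<lambda>x. lam0 x - wtn (fst p) x)"
    unfolding WSV_def by blast
  let ?L = "map (\<lambda>p. (\<lambda>i. fst p i + dl j i, act (f j) m (snd p))) L"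
  have "act (f j) m u = sum_list (map snd ?L)"
    unfolding L(1) act_sum_list[OF f_D[OF j] m] by (simp add: comp_def)
  moreover have "nz (fst q) \<and> snd q \<in> WV (\<lambda>x. lam0 x - wtn (fst q) x)" if "q \<in> set ?L" for q
  proof -
    from that obtain p where p: "p \<in> set L" "q = (\<lambda>i. fst p i + dl j i, act (f j) m (snd p))" by auto
    have "act (f j) m (snd p) \<in> WV (\<lambda>x. (lam0 x - wtn (fst p) x) - al j x)"
      using WV_f[OF _ j m] L(2) p(1) by blast
    moreover have "(\<lambda>x. (lam0 x - wtn (fst p) x) - al j x) = (\<lambda>x. lam0 x - wtn (\<lambda>i. fst p i + dl j i) x)"
    proof (rule ext)
      fix x show "lam0 x - wtn (fst p) x - al j x = lam0 x - wtn (\<lambda>i. fst p i + dl j i) x"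
        using wtn_inc[OF j, of "fst p" x] by simp
    qed
    ultimately show ?thesis using p nz_inc[OF j] by simp
  qed
  ultimately show ?thesis unfolding WSV_def by blast
qed

lemma v0_notin_WSV: "v0 \<notin> WSV"
proof
  assume "v0 \<in> WSV"
  then obtain L where L: "v0 = sum_list (map snd L)"
    "\<forall>p\<in>set L. nz (fst p) \<and> snd p \<in> WV (\<lambda>x. lam0 x - wtn (fst p) x)"
    unfolding WSV_def by blast
  let ?L = "map (\<lambda>p. (\<lambda>x. lam0 x - wtn (fst p) x, - snd p)) L"
  have "v0 = 0"
  proof (rule indepV_list[OF v0_WV])
    show "snd q \<in> WV (fst q)" if "q \<in> set ?L" for q
      using that L(2) WV_sc[of _ _ "-1"] by auto
    show "\<exists>x\<in>h1 \<union> h2. fst q x \<noteq> lam0 x" if "q \<in> set ?L" for q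
    proof -
      from that obtain p where p: "p \<in> set L" "q = (\<lambda>x. lam0 x - wtn (fst p) x, - snd p)" by auto
      have "\<exists>i<l. (of_nat (fst p i) :: complex) \<noteq> 0" using L(2) p(1) by (auto simp: nz_def)
      from H_distinct[OF this] obtain x where "x \<in> h1 \<union> h2" "wtn (fst p) x \<noteq> 0"
        by (auto simp: wtn_def)
      then show ?thesis using p by auto
    qed
    show "v0 + sum_list (map snd ?L) = 0"
      using L(1) neg_sum_list[of snd L, symmetric] by (simp add: comp_def)
  qed
  then show False using hw(1) by simp
qed

context
  fixes I
  assumes Icof: "cofinite_ideal n I" and IZ: "\<forall>x\<in>h1. \<forall>a\<in>I. lpsi x a = 0"
begin

lemma I_ideal: "laurent_ideal n I" using Icof by (simp add: cofinite_ideal_def)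
lemma I_lau: "a \<in> I \<Longrightarrow> a \<in> laurent n" using I_ideal by (auto simp: laurent_ideal_def)
lemma I_shift: "a \<in> I \<Longrightarrow> m \<in> EE \<Longrightarrow> shift m a \<in> I"
  using I_ideal delta_lau by (auto simp: laurent_ideal_def shift_lmult)
lemma I_psi: "x \<in> h1 \<Longrightarrow> a \<in> I \<Longrightarrow> lpsi x a = 0" using IZ by blast

definition U0 :: "'v set" where
  "U0 = {u. \<exists>Y a. Y \<in> Nm \<and> a \<in> I \<and> u = lact Y a v0}"

lemma U0I: "Y \<in> Nm \<Longrightarrow> a \<in> I \<Longrightarrow> lact Y a v0 \<in> FS U0"
  by (rule FS.FS_base) (auto simp: U0_def)

lemma U0_good: "goodU U0"
  unfolding goodU_def
proof (intro conjI ballI allI impI)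
  fix u x m assume u: "u \<in> U0" and x: "x \<in> h1" and m: "m \<in> EE"
  then obtain Y a where Ya: "Y \<in> Nm" "a \<in> I" "u = lact Y a v0" unfolding U0_def by blast
  have "act x m u = lact Y a (act x m v0) + lact (br x Y) (shift m a) v0"
    unfolding Ya(3) using x by (intro lact_comm[OF _ Nm_D[OF Ya(1)] m I_lau[OF Ya(2)]]) simp
  also have "\<dots> = sv (psi1 x m) (lact Y a v0) + lact (br x Y) (shift m a) v0"
    using hw_h1[OF x m] lact_scv[OF Nm_D[OF Ya(1)] I_lau[OF Ya(2)]] by simp
  finally show "act x m u \<in> FS U0"
    using U0I[OF Ya(1,2)] U0I[OF Nm_hh[OF _ Ya(1)] I_shift[OF Ya(2) m]] x
    by (simp add: FS.intros)
next
  fix u x assume u: "u \<in> U0" and x: "x \<in> h2"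
  then obtain Y a where Ya: "Y \<in> Nm" "a \<in> I" "u = lact Y a v0" unfolding U0_def by blast
  have "actd x u = lact Y a (actd x v0) + lact (br x Y) a v0"
    unfolding Ya(3) by (rule lactd_comm[OF x Nm_D[OF Ya(1)] I_lau[OF Ya(2)]])
  also have "\<dots> = sv (psi2 x) (lact Y a v0) + lact (br x Y) a v0"
    using hw_h2[OF x] lact_scv[OF Nm_D[OF Ya(1)] I_lau[OF Ya(2)]] by simp
  finally show "actd x u \<in> FS U0"
    using U0I[OF Ya(1,2)] U0I[OF Nm_hh[OF h2_hh[OF x] Ya(1)] Ya(2)]
    by (simp add: FS.intros)
next
  fix u i m assume u: "u \<in> U0" and i: "i < l" and m: "m \<in> EE"
  then obtain Y a where Ya: "Y \<in> Nm" "a \<in> I" "u = lact Y a v0" unfolding U0_def by blast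
  have al: "a \<in> laurent n" by (rule I_lau[OF Ya(2)])
  have sa: "shift m a \<in> I" by (rule I_shift[OF Ya(2) m])
  have "act (e i) m u = lact Y a (act (e i) m v0) + lact (br (e i) Y) (shift m a) v0"
    unfolding Ya(3) by (rule lact_comm[OF e_D[OF i] Nm_D[OF Ya(1)] m al])
  also have "\<dots> = lact (br (e i) Y) (shift m a) v0"
    using e_v0[OF i m] lact_0v[OF Nm_D[OF Ya(1)] al] by simp
  finally have eq: "act (e i) m u = lact (br (e i) Y) (shift m a) v0" .
  from N4[OF Ya(1) i] obtain y c where yc: "y \<in> Nm" "c \<in> Hc" "br (e i) Y = y + c" by (auto elim: ssumE)
  have "lact (br (e i) Y) (shift m a) v0 = lact y (shift m a) v0 + lact c (shift m a) v0"
    unfolding yc(3) by (rule lact_addX[OF Nm_D[OF yc(1)] _ I_lau[OF sa]]) (use Hc_h1[OF yc(2)] in simp)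
  also have "lact c (shift m a) v0 = 0"
    using lact_h1_v0[OF Hc_h1[OF yc(2)] I_lau[OF sa]] I_psi[OF Hc_h1[OF yc(2)] sa] by simp
  finally show "act (e i) m u \<in> FS U0" unfolding eq using U0I[OF yc(1) sa] by simp
qed

lemma FS_U0_WSV: "v \<in> FS U0 \<Longrightarrow> v \<in> WSV"
proof (induction v rule: FS.induct)
  case (FS_base u)
  then obtain Y a where Ya: "Y \<in> Nm" "a \<in> I" "u = lact Y a v0" unfolding U0_def by blast
  from Nm_WSm[OF Ya(1)] obtain ys where ys: "Y = sum_list (map snd ys)"
      "\<forall>p\<in>set ys. nz (fst p) \<and> snd p \<in> root_space sc br hh (\<lambda>y. - wtn (fst p) y)"
    unfolding WSm_def by blast
  have yD: "snd p \<in> D" if "p \<in> set ys" for p using ys(2) that rv_D by blast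
  let ?L = "map (\<lambda>p. (fst p, lact (snd p) a v0)) ys"
  have "u = sum_list (map snd ?L)"
    unfolding Ya(3) ys(1) by (subst lact_sum_listX[OF yD I_lau[OF Ya(2)]]) (simp_all add: comp_def)
  moreover have "nz (fst q) \<and> snd q \<in> WV (\<lambda>x. lam0 x - wtn (fst q) x)" if "q \<in> set ?L" for q
  proof -
    from that obtain p where p: "p \<in> set ys" "q = (fst p, lact (snd p) a v0)" by auto
    have "lact (snd p) a v0 \<in> WV (\<lambda>x. lam0 x + - wtn (fst p) x)"
      using WV_lact_v0[OF yD[OF p(1)] _ I_lau[OF Ya(2)]] ys(2) p(1) by blast
    then show ?thesis using p ys(2) by simp
  qed
  ultimately show ?case unfolding WSV_def by blast
next
  case FS_zero
  then show ?case unfolding WSV_def by (intro CollectI exI[of _ "[]"]) simp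
next
  case (FS_add u w)
  show ?case by (rule WSV_add[OF FS_add.IH])
next
  case (FS_sc u c)
  show ?case by (rule WSV_sc[OF FS_sc.IH])
next
  case (FS_f u j m)
  show ?case by (rule WSV_f[OF FS_f.IH FS_f.hyps(2,3)])
qed

lemma Kv0: "Y \<in> Nm \<Longrightarrow> a \<in> I \<Longrightarrow> lact Y a v0 = 0"
proof -
  assume Ya: "Y \<in> Nm" "a \<in> I"
  have "FS U0 \<noteq> UNIV" using FS_U0_WSV v0_notin_WSV by blast
  then have "FS U0 = {0}" using FS_triv[OF U0_good] by blast
  then show ?thesis using U0I[OF Ya] by blast
qed

lemma Kall: "Y \<in> Nm \<Longrightarrow> a \<in> I \<Longrightarrow> lact Y a u = 0"
proof -
  have "u \<in> FS {v0}" using FS_v0 by simp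
  then show "Y \<in> Nm \<Longrightarrow> a \<in> I \<Longrightarrow> lact Y a u = 0"
  proof (induction u arbitrary: Y a rule: FS.induct)
    case (FS_base u)
    then show ?case using Kv0 by simp
  next
    case FS_zero
    then show ?case using lact_0v Nm_D I_lau by simp
  next
    case (FS_add u w)
    then show ?case using lact_addv Nm_D I_lau by simp
  next
    case (FS_sc u c)
    then show ?case using lact_scv Nm_D I_lau by simp
  next
    case (FS_f u j m)
    have "act (f j) m (lact Y a u) = lact Y a (act (f j) m u) + lact (br (f j) Y) (shift m a) u"
      by (rule lact_comm[OF f_D[OF FS_f.hyps(2)] Nm_D[OF FS_f.prems(1)] FS_f.hyps(3) I_lau[OF FS_f.prems(2)]])
    moreover have "lact Y a u = 0" by (rule FS_f.IH[OF FS_f.prems])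
    moreover have "lact (br (f j) Y) (shift m a) u = 0"
      by (rule FS_f.IH[OF NS_brc[OF NS.NS_gen[OF FS_f.hyps(2)] FS_f.prems(1)] I_shift[OF FS_f.prems(2) FS_f.hyps(3)]])
    ultimately show ?case using f_D[OF FS_f.hyps(2)] FS_f.hyps(3) by simp
  qed
qed

end
end



context KMS begin

primrec fwB :: "(nat \<times> ((nat \<Rightarrow> int) \<Rightarrow> complex)) list \<Rightarrow> 'v" where
  "fwB [] = v0"
| "fwB (p # w) = lact (f (fst p)) (snd p) (fwB w)"

definition cntw :: "(nat \<times> ((nat \<Rightarrow> int) \<Rightarrow> complex)) list \<Rightarrow> nat \<Rightarrow> nat" where
  "cntw w = (\<lambda>i. count_list (map fst w) i)"

lemma cntw_Cons: "cntw (p # w) = (\<lambda>i. cntw w i + dl (fst p) i)"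
  by (rule ext) (simp add: cntw_def dl_def)

lemma fwB_WV: "set w \<subseteq> {..<l} \<times> laurent n \<Longrightarrow> fwB w \<in> WV (\<lambda>x. lam0 x - wtn (cntw w) x)"
proof (induction w)
  case Nil
  have "(\<lambda>x. lam0 x - wtn (cntw []) x) = lam0" by (rule ext) (simp add: cntw_def wtn_def)
  then show ?case using v0_WV by simp
next
  case (Cons p w)
  have j: "fst p < l" and b: "snd p \<in> laurent n" using Cons.prems by auto
  have "fwB (p # w) \<in> WV (\<lambda>x. (lam0 x - wtn (cntw w) x) - al (fst p) x)"
    using WV_lact_f[OF Cons.IH j b] Cons.prems by simp
  moreover have "(\<lambda>x. (lam0 x - wtn (cntw w) x) - al (fst p) x) = (\<lambda>x. lam0 x - wtn (cntw (p # w)) x)"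
  proof (rule ext)
    fix x show "lam0 x - wtn (cntw w) x - al (fst p) x = lam0 x - wtn (cntw (p # w)) x"
      unfolding cntw_Cons using wtn_inc[OF j, of "cntw w" x] by simp
  qed
  ultimately show ?case by simp
qed

lemma len_cnt: "set (map fst w) \<subseteq> {..<l} \<Longrightarrow> length w = (\<Sum>i<l. cntw w i)"
proof (induction w)
  case Nil
  then show ?case by (simp add: cntw_def)
next
  case (Cons p w)
  have j: "fst p < l" using Cons.prems by simp
  have "(\<Sum>i<l. cntw (p # w) i) = (\<Sum>i<l. cntw w i + (if i = fst p then 1 else 0))"
    unfolding cntw_Cons dl_def ..
  also have "\<dots> = (\<Sum>i<l. cntw w i) + 1" using j by (simp add: sum.distrib)
  finally show ?case using Cons by simp
qed

lemma length_eq: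
  assumes w: "set (map fst w) \<subseteq> {..<l}" and w': "set (map fst w') \<subseteq> {..<l}"
    and eq: "\<And>x. x \<in> h1 \<union> h2 \<Longrightarrow> wtn (cntw w) x = wtn (cntw w') x"
  shows "length w = length w'"
proof -
  let ?c = "\<lambda>i. (of_nat (cntw w i) :: complex) - of_nat (cntw w' i)"
  have "\<not> (\<exists>i<l. ?c i \<noteq> 0)"
  proof
    assume "\<exists>i<l. ?c i \<noteq> 0"
    from H_distinct[OF this] obtain x where x: "x \<in> h1 \<union> h2" "(\<Sum>i<l. ?c i * al i x) \<noteq> 0" by blast
    have "(\<Sum>i<l. ?c i * al i x) = wtn (cntw w) x - wtn (cntw w') x"
      by (simp add: wtn_def left_diff_distrib sum_subtractf)
    then show False using x eq by simp
  qed
  then have "\<forall>i<l. cntw w i = cntw w' i" by simp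
  then have "(\<Sum>i<l. cntw w i) = (\<Sum>i<l. cntw w' i)" by simp
  then show ?thesis using len_cnt[OF w] len_cnt[OF w'] by simp
qed

context
  fixes I
  assumes Icof: "cofinite_ideal n I" and IZ: "\<forall>x\<in>h1. \<forall>a\<in>I. lpsi x a = 0"
begin

definition Bc where "Bc = (SOME B. finite B \<and> B \<subseteq> laurent n \<and>
        (\<forall>a\<in>laurent n. \<exists>c. (\<lambda>m. a m - (\<Sum>b\<in>B. c b * b m)) \<in> I))"

lemma Bc: "finite Bc" "Bc \<subseteq> laurent n" "\<forall>a\<in>laurent n. \<exists>c. (\<lambda>m. a m - (\<Sum>b\<in>Bc. c b * b m)) \<in> I"
proof -
  have "\<exists>B. finite B \<and> B \<subseteq> laurent n \<and> (\<forall>a\<in>laurent n. \<exists>c. (\<lambda>m. a m - (\<Sum>b\<in>B. c b * b m)) \<in> I)"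
    using Icof by (simp add: cofinite_ideal_def)
  then have "finite Bc \<and> Bc \<subseteq> laurent n \<and> (\<forall>a\<in>laurent n. \<exists>c. (\<lambda>m. a m - (\<Sum>b\<in>Bc. c b * b m)) \<in> I)"
    unfolding Bc_def by (rule someI_ex)
  then show "finite Bc" "Bc \<subseteq> laurent n" "\<forall>a\<in>laurent n. \<exists>c. (\<lambda>m. a m - (\<Sum>b\<in>Bc. c b * b m)) \<in> I"
    by auto
qed

lemma act_f_red: assumes j: "j < l" and m: "m \<in> EE"
  shows "\<exists>c. \<forall>u. act (f j) m u = (\<Sum>b\<in>Bc. sv (c b) (lact (f j) b u))"
proof -
  obtain c where c: "(\<lambda>k. delta m k - (\<Sum>b\<in>Bc. c b * b k)) \<in> I"
    using Bc(3) delta_lau[OF m] by blast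
  have "act (f j) m u = (\<Sum>b\<in>Bc. sv (c b) (lact (f j) b u))" for u
  proof -
    have "0 = lact (f j) (\<lambda>k. delta m k - (\<Sum>b\<in>Bc. c b * b k)) u"
      using Kall[OF Icof IZ NS.NS_gen[OF j] c] by simp
    also have "\<dots> = lact (f j) (delta m) u - (\<Sum>b\<in>Bc. sv (c b) (lact (f j) b u))"
      unfolding lact_def
      by (rule lsum_lin_comb[OF VSv Bc(1)]) (use Bc(2) lau_fin delta_lau[OF m] in auto)
    finally show ?thesis using lact_delta[OF m] by simp
  qed
  then show ?thesis by blast
qed

abbreviation "Wall \<equiv> {w. set w \<subseteq> {..<l} \<times> Bc}"

lemma span_all: "v \<in> V.span (fwB ` Wall)"
proof -
  have "v \<in> FS {v0}" using FS_v0 by simp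
  then show ?thesis
  proof (induction v rule: FS.induct)
    case (FS_base u)
    have "fwB [] \<in> fwB ` Wall" by (rule imageI) simp
    then show ?case using FS_base by (intro V.span_base) simp
  next
    case FS_zero
    then show ?case by (rule V.span_zero)
  next
    case (FS_add u w)
    then show ?case by (intro V.span_add)
  next
    case (FS_sc u c)
    then show ?case by (intro V.span_scale)
  next
    case (FS_f u j m)
    obtain c where c: "\<And>u. act (f j) m u = (\<Sum>b\<in>Bc. sv (c b) (lact (f j) b u))"
      using act_f_red[OF FS_f.hyps(2,3)] by blast
    show ?case
    proof (rule V.span_induct_alt[OF FS_f.IH])
      show "act (f j) m 0 \<in> V.span (fwB ` Wall)" using f_D[OF FS_f.hyps(2)] FS_f.hyps(3) by (simp add: V.span_zero)
    next
      fix d x y assume x: "x \<in> fwB ` Wall" and y: "act (f j) m y \<in> V.span (fwB ` Wall)"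
      from x obtain w where w: "w \<in> Wall" "x = fwB w" by blast
      have "act (f j) m x = (\<Sum>b\<in>Bc. sv (c b) (fwB ((j, b) # w)))" unfolding c w(2) by simp
      moreover have "fwB ((j, b) # w) \<in> fwB ` Wall" if "b \<in> Bc" for b
        using w(1) that FS_f.hyps(2) by (intro imageI) auto
      ultimately have "act (f j) m x \<in> V.span (fwB ` Wall)"
        by (simp only:) (rule V.span_sum, rule V.span_scale, rule V.span_base, simp)
      then show "act (f j) m (sv d x + y) \<in> V.span (fwB ` Wall)"
        using y f_D[OF FS_f.hyps(2)] FS_f.hyps(3) by (simp add: act_addv act_scv V.span_add V.span_scale)
    qed
  qed
qed

lemma bwd: "fin_dim sv (WV lam)"
proof -
  define Wl where "Wl = {w \<in> Wall. \<forall>x\<in>h1 \<union> h2. lam0 x - wtn (cntw w) x = lam x}"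
  define K where "K = length (SOME w. w \<in> Wl)"
  define B0 where "B0 = fwB ` {w. set w \<subseteq> {..<l} \<times> Bc \<and> length w = K}"
  have finB0: "finite B0" unfolding B0_def using Bc(1) by (intro finite_imageI finite_lists_length_eq) auto
  have Wl_len: "length w = K" if "w \<in> Wl" for w
  proof -
    have ex: "(SOME w. w \<in> Wl) \<in> Wl" using that by (rule someI)
    obtain w' where w': "w' = (SOME w. w \<in> Wl)" by blast
    have A: "set w \<subseteq> {..<l} \<times> Bc" "\<forall>x\<in>h1 \<union> h2. lam0 x - wtn (cntw w) x = lam x"
      using that by (auto simp: Wl_def)
    have B: "set w' \<subseteq> {..<l} \<times> Bc" "\<forall>x\<in>h1 \<union> h2. lam0 x - wtn (cntw w') x = lam x"
      using ex w' by (auto simp: Wl_def)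
    have "length w = length w'"
    proof (rule length_eq)
      show "set (map fst w) \<subseteq> {..<l}" using A(1) by auto
      show "set (map fst w') \<subseteq> {..<l}" using B(1) by auto
      fix x assume x: "x \<in> h1 \<union> h2"
      then have "lam0 x - wtn (cntw w) x = lam0 x - wtn (cntw w') x" using A(2) B(2) by simp
      then show "wtn (cntw w) x = wtn (cntw w') x" by simp
    qed
    then show ?thesis unfolding K_def w' .
  qed
  have "in_fspan sv B0 v" if v: "v \<in> WV lam" for v
  proof -
    have "v \<in> V.span (fwB ` Wall)" by (rule span_all)
    then obtain T r where T: "v = (\<Sum>a\<in>T. sv (r a) a)" "finite T" "T \<subseteq> fwB ` Wall"
      unfolding V.span_explicit by blast
    define wt where "wt t = (SOME w. w \<in> Wall \<and> t = fwB w)" for t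
    have wt: "wt t \<in> Wall \<and> t = fwB (wt t)" if "t \<in> T" for t
    proof -
      from that T(3) obtain w where "w \<in> Wall" "t = fwB w" by blast
      then show ?thesis unfolding wt_def by (intro someI[where P="\<lambda>w. w \<in> Wall \<and> t = fwB w"]) auto
    qed
    define mt where "mt t = (\<lambda>x. lam0 x - wtn (cntw (wt t)) x)" for t
    have tWV: "t \<in> WV (mt t)" if "t \<in> T" for t
    proof -
      have "set (wt t) \<subseteq> {..<l} \<times> laurent n" using wt[OF that] Bc(2) by auto
      then show ?thesis using fwB_WV wt[OF that] unfolding mt_def by metis
    qed
    define Tg where "Tg = {t \<in> T. \<forall>x\<in>h1 \<union> h2. mt t x = lam x}"
    have TgT: "Tg \<subseteq> T" by (auto simp: Tg_def)
    have finTg: "finite Tg" using T(2) TgT by (rule finite_subset[rotated])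
    have TgWV: "t \<in> WV lam" if "t \<in> Tg" for t
      using tWV[of t] that WV_cong[of "mt t" lam] by (auto simp: Tg_def)
    define sg where "sg = (\<Sum>t\<in>Tg. sv (r t) t)"
    have sgWV: "sg \<in> WV lam" unfolding sg_def
      by (rule cs_sum[OF WV_cs]) (use TgWV WV_sc in blast)
    have split: "v = sg + (\<Sum>t\<in>T - Tg. sv (r t) t)"
      unfolding T(1) sg_def using sum.subset_diff[OF TgT T(2)] by (simp add: add.commute)
    have "v - sg = 0"
    proof (rule indepV[where S="T - Tg" and g="\<lambda>t. - sv (r t) t" and \<mu>=mt])
      show "v - sg \<in> WV lam" using WV_add[OF v WV_sc[OF sgWV, of "-1"]] by simp
      show "finite (T - Tg)" using T(2) by simp
      show "- sv (r t) t \<in> WV (mt t)" if "t \<in> T - Tg" for t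
        using WV_sc[OF tWV[of t], of "- r t"] that by simp
      show "\<exists>x\<in>h1 \<union> h2. mt t x \<noteq> lam x" if "t \<in> T - Tg" for t
        using that by (auto simp: Tg_def)
      show "v - sg + (\<Sum>t\<in>T - Tg. - sv (r t) t) = 0"
        using split by (simp add: sum_negf)
    qed
    then have vsg: "v = sg" by simp
    have "t \<in> B0" if "t \<in> Tg" for t
    proof -
      have tT: "t \<in> T" using that TgT by auto
      have "wt t \<in> Wl" using wt[OF tT] that by (auto simp: Wl_def Tg_def mt_def)
      then have "length (wt t) = K" by (rule Wl_len)
      then show ?thesis unfolding B0_def using wt[OF tT] by blast
    qed
    then have "v \<in> V.span B0" unfolding vsg sg_def
      by (intro V.span_sum V.span_scale) (rule V.span_base, simp)
    then obtain u where "v = (\<Sum>b\<in>B0. sv (u b) b)" using V.span_finite[OF finB0] by auto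
    then show ?thesis unfolding in_fspan_def by blast
  qed
  then show ?thesis unfolding fin_dim_def using finB0 by blast
qed

end

lemma main: "(\<forall>lam. fin_dim sv (weight_space (hh \<inter> derived sc br) h2 sv act actd lam))
     \<longleftrightarrow> (\<exists>I. cofinite_ideal n I \<and>
            (\<forall>x\<in>hh \<inter> derived sc br. \<forall>a\<in>I. (\<Sum>m\<in>{m. a m \<noteq> 0}. a m * psi1 x m) = 0))"
proof
  assume "\<forall>lam. fin_dim sv (weight_space (hh \<inter> derived sc br) h2 sv act actd lam)"
  from fwd[OF this] show "\<exists>I. cofinite_ideal n I \<and>
            (\<forall>x\<in>hh \<inter> derived sc br. \<forall>a\<in>I. (\<Sum>m\<in>{m. a m \<noteq> 0}. a m * psi1 x m) = 0)"
    by (simp add: lpsi_eq)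
next
  assume "\<exists>I. cofinite_ideal n I \<and>
            (\<forall>x\<in>hh \<inter> derived sc br. \<forall>a\<in>I. (\<Sum>m\<in>{m. a m \<noteq> 0}. a m * psi1 x m) = 0)"
  then obtain I where I: "cofinite_ideal n I" "\<forall>x\<in>h1. \<forall>a\<in>I. lpsi x a = 0"
    by (auto simp: lpsi_eq)
  show "\<forall>lam. fin_dim sv (weight_space (hh \<inter> derived sc br) h2 sv act actd lam)"
    using bwd[OF I] by blast
qed

end


theorem lemma3p7:
  fixes sc :: "complex \<Rightarrow> 'g::ab_group_add \<Rightarrow> 'g" and br :: "'g \<Rightarrow> 'g \<Rightarrow> 'g"
    and l :: nat and C :: "nat \<Rightarrow> nat \<Rightarrow> int" and hh :: "'g set"
    and al :: "nat \<Rightarrow> 'g \<Rightarrow> complex" and cr e f :: "nat \<Rightarrow> 'g"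
    and h2 :: "'g set" and n :: nat
    and psi1 :: "'g \<Rightarrow> (nat \<Rightarrow> int) \<Rightarrow> complex" and psi2 :: "'g \<Rightarrow> complex"
    and sv :: "complex \<Rightarrow> 'v::ab_group_add \<Rightarrow> 'v"
    and act :: "'g \<Rightarrow> (nat \<Rightarrow> int) \<Rightarrow> 'v \<Rightarrow> 'v" and actd :: "'g \<Rightarrow> 'v \<Rightarrow> 'v"
    and v0 :: 'v
  assumes KM: "kac_moody sc br l C hh al cr e f"
    and h2_sub: "csubspace sc h2" "h2 \<subseteq> hh"
    and h2_compl: "(hh \<inter> derived sc br) \<inter> h2 = {0}"
                  "\<forall>x\<in>hh. \<exists>a\<in>hh \<inter> derived sc br. \<exists>b\<in>h2. x = a + b"
    and n_pos: "n \<ge> 1"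
    and psi_lin: "\<forall>m\<in>expo n. clinear_on sc (hh \<inter> derived sc br) (\<lambda>x. psi1 x m)"
                 "clinear_on sc h2 psi2"
    and irr: "irreducible_module sc br n h2 sv act actd"
    and hw: "v0 \<noteq> 0"
            "\<forall>X\<in>nplus sc br l hh al. \<forall>m\<in>expo n. act X m v0 = 0"
            "\<forall>x\<in>hh \<inter> derived sc br. \<forall>m\<in>expo n. act x m v0 = sv (psi1 x m) v0"
            "\<forall>x\<in>h2. actd x v0 = sv (psi2 x) v0"
  shows "(\<forall>lam. fin_dim sv (weight_space (hh \<inter> derived sc br) h2 sv act actd lam))
     \<longleftrightarrow> (\<exists>I. cofinite_ideal n I \<and>
            (\<forall>x\<in>hh \<inter> derived sc br. \<forall>a\<in>I. (\<Sum>m\<in>{m. a m \<noteq> 0}. a m * psi1 x m) = 0))"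
proof -
  interpret K: KMS sc br l C hh al cr e f h2 n psi1 psi2 sv act actd v0
    by (rule KMS.intro[OF KM h2_sub h2_compl psi_lin irr hw])
  show ?thesis by (rule K.main)
qed

end
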